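(* Let $0=K^0<K^1<\cdots<K^N$ and $0=T_0<T_1<\cdots<T_M$, and let $C_j^i$ ($j=1,\dots,M$, $i=0,\dots,N$) be real numbers. With $dC_j^i:=\frac{C_j^{i+1}-C_j^i}{K^{i+1}-K^i}$ for $i=0,\dots,N-1$ and $dC_j^N:=0$, assume for every $j=1,\dots,M$: $C_j^0=1$; $dC_j^0=-1$; $C_j^N=0$; $dC_j^{i-1}\le dC_j^{i}$ for $i=1,\dots,N$; and $C_j^i\le C_{j+1}^i$ for all $i$ and $j=1,\dots,M-1$. For $j=1,\dots,M$ let $\bar C_j(K):=dC_j^i(K-K^{i+1})+C_j^{i+1}$ for $K^i\le K<K^{i+1}$ ($i=0,\dots,N-1$) and $\bar C_j(K):=0$ for $K\ge K^N$; let $\bar C_0(K):=(1-K)^+$. For $j=0,\dots,M-1$ let $\alpha_j:[T_j,T_{j+1}]\to[0,1]$ be non-decreasing with $\alpha_j(T_j)=0$, $\alpha_j(T_{j+1})=1$, and set $\bar C(T,K):=\alpha_j(T)\bar C_{j+1}(K)+(1-\alpha_j(T))\bar C_j(K)$ for $T\in[T_j,T_{j+1}]$, $K\ge 0$. Then $\bar C$ is an arbitrage-free call price surface on $[0,T_M]\times[0,\infty)$.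
   Context: A function $C:\mathcal T\times[0,\infty)\to[0,\infty)$, with $\mathcal T\subseteq[0,\infty)$ an interval containing $0$, is an arbitrage-free call price surface on $\mathcal T\times[0,\infty)$ if there exist a probability measure $\mathbb P$ and a $\mathbb P$-martingale $(Z_T)_{T\in\mathcal T}$ with $Z_0=1$ a.s. and $Z_T>0$ a.s. for all $T$, such that $C(T,K)=\mathbb E_{\mathbb P}[(Z_T-K)^+]$ for all $T\in\mathcal T$, $K\ge0$. *)

theory Defs
  imports "HOL-Probability.Probability"
begin

definition is_filtration ::
  "'a measure \<Rightarrow> real set \<Rightarrow> (real \<Rightarrow> 'a measure) \<Rightarrow> bool" where
  "is_filtration M TT F \<longleftrightarrow>
     (\<forall>t\<in>TT. subalgebra M (F t)) \<and>
     (\<forall>s\<in>TT. \<forall>t\<in>TT. s \<le> t \<longrightarrow> sets (F s) \<subseteq> sets (F t))"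

definition is_martingale ::
  "'a measure \<Rightarrow> real set \<Rightarrow> (real \<Rightarrow> 'a measure) \<Rightarrow> (real \<Rightarrow> 'a \<Rightarrow> real) \<Rightarrow> bool" where
  "is_martingale M TT F Z \<longleftrightarrow>
     is_filtration M TT F \<and>
     (\<forall>t\<in>TT. integrable M (Z t) \<and> Z t \<in> borel_measurable (F t)) \<and>
     (\<forall>s\<in>TT. \<forall>t\<in>TT. s \<le> t \<longrightarrow>
        (AE \<omega> in M. real_cond_exp M (F s) (Z t) \<omega> = Z s \<omega>))"

text \<open>Arbitrage-free call price surface on TT x [0,oo).  The sample space is the
  path space real => real (rich enough to carry the canonical version of any
  real process indexed by reals).\<close>
definition arbitrage_free_call_surface ::
  "real set \<Rightarrow> (real \<Rightarrow> real \<Rightarrow> real) \<Rightarrow> bool" where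
  "arbitrage_free_call_surface TT C \<longleftrightarrow>
     (\<exists>(P :: (real \<Rightarrow> real) measure) F Z.
        prob_space P \<and> is_martingale P TT F Z \<and>
        (AE \<omega> in P. Z 0 \<omega> = 1) \<and>
        (\<forall>t\<in>TT. AE \<omega> in P. Z t \<omega> > 0) \<and>
        (\<forall>t\<in>TT. \<forall>k\<ge>0. C t k = (\<integral>\<omega>. max (Z t \<omega> - k) 0 \<partial>P)))"

definition dC :: "nat \<Rightarrow> (nat \<Rightarrow> real) \<Rightarrow> (nat \<Rightarrow> nat \<Rightarrow> real) \<Rightarrow> nat \<Rightarrow> nat \<Rightarrow> real" where
  "dC N Ks C j i = (if i < N then (C j (Suc i) - C j i) / (Ks (Suc i) - Ks i) else 0)"

definition Cbar :: "nat \<Rightarrow> (nat \<Rightarrow> real) \<Rightarrow> (nat \<Rightarrow> nat \<Rightarrow> real) \<Rightarrow> nat \<Rightarrow> real \<Rightarrow> real" where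
  "Cbar N Ks C j x =
     (if j = 0 then max (1 - x) 0
      else if (\<exists>i<N. Ks i \<le> x \<and> x < Ks (Suc i)) then
        (let i = (THE i. i < N \<and> Ks i \<le> x \<and> x < Ks (Suc i))
         in dC N Ks C j i * (x - Ks (Suc i)) + C j (Suc i))
      else 0)"

end

theory Submission
  imports Defs
begin

lemma integral_bind_pmf_fin:
  fixes f :: "'b \<Rightarrow> real"
  assumes fin: "finite (set_pmf M)" and finN: "\<And>x. x \<in> set_pmf M \<Longrightarrow> finite (set_pmf (N x))"
  shows "(\<integral>y. f y \<partial>measure_pmf (bind_pmf M N)) = (\<integral>x. (\<integral>y. f y \<partial>measure_pmf (N x)) \<partial>measure_pmf M)"
proof -
  let ?A = "set_pmf (bind_pmf M N)"
  have finA: "finite ?A" using fin finN by simp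
  have "(\<integral>y. f y \<partial>measure_pmf (bind_pmf M N)) = (\<Sum>y\<in>?A. f y * pmf (bind_pmf M N) y)"
    by (rule integral_measure_pmf_real[OF finA]) auto
  also have "\<dots> = (\<Sum>y\<in>?A. f y * (\<Sum>x\<in>set_pmf M. pmf (N x) y * pmf M x))"
    by (intro sum.cong refl, subst pmf_bind, subst integral_measure_pmf_real[OF fin]) auto
  also have "\<dots> = (\<Sum>y\<in>?A. \<Sum>x\<in>set_pmf M. f y * pmf (N x) y * pmf M x)"
    by (simp add: sum_distrib_left mult_ac)
  also have "\<dots> = (\<Sum>x\<in>set_pmf M. \<Sum>y\<in>?A. f y * pmf (N x) y * pmf M x)"
    by (rule sum.swap)
  also have "\<dots> = (\<Sum>x\<in>set_pmf M. (\<Sum>y\<in>?A. f y * pmf (N x) y) * pmf M x)"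
    by (simp add: sum_distrib_right)
  also have "\<dots> = (\<Sum>x\<in>set_pmf M. (\<integral>y. f y \<partial>measure_pmf (N x)) * pmf M x)"
  proof (intro sum.cong refl)
    fix x assume x: "x \<in> set_pmf M"
    have "(\<integral>y. f y \<partial>measure_pmf (N x)) = (\<Sum>y\<in>?A. f y * pmf (N x) y)"
      by (rule integral_measure_pmf_real[OF finA]) (use x in auto)
    then show "(\<Sum>y\<in>?A. f y * pmf (N x) y) * pmf M x = (\<integral>y. f y \<partial>measure_pmf (N x)) * pmf M x" by simp
  qed
  also have "\<dots> = (\<integral>x. (\<integral>y. f y \<partial>measure_pmf (N x)) \<partial>measure_pmf M)"
    by (rule integral_measure_pmf_real[OF fin, symmetric]) auto
  finally show ?thesis .
qed

definition cl :: "real pmf \<Rightarrow> real \<Rightarrow> real" where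
  "cl p k = (\<integral>y. max (y - k) 0 \<partial>measure_pmf p)"

lemma pmf_as_integral: "pmf p z = (\<integral>y. indicator {z} y \<partial>measure_pmf p)"
  by (subst integral_measure_pmf_real[of "{z}"]) (auto split: split_indicator_asm)

lemma hinge_y:
  fixes xa xi xb y :: real
  assumes "xa < xi" "xi < xb"
  shows "(xb - xa) * max (y - xi) 0 \<le> (xb - xi) * max (y - xa) 0 + (xi - xa) * max (y - xb) 0"
    and "y \<le> xa \<or> xb \<le> y \<Longrightarrow>
         (xb - xa) * max (y - xi) 0 = (xb - xi) * max (y - xa) 0 + (xi - xa) * max (y - xb) 0"
proof -
  show "(xb - xa) * max (y - xi) 0 \<le> (xb - xi) * max (y - xa) 0 + (xi - xa) * max (y - xb) 0"
  proof -
    have 1: "0 \<le> (xb - y) * (xi - xa)" if "y \<le> xb" using that assms by simp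
    have 2: "0 \<le> (xb - xi) * (y - xa)" if "xa \<le> y" using that assms by simp
    show ?thesis
      using assms 1 2 by (cases "y \<le> xa"; cases "y \<le> xi"; cases "y \<le> xb")
        (auto simp: max_def algebra_simps)
  qed
  show "y \<le> xa \<or> xb \<le> y \<Longrightarrow>
         (xb - xa) * max (y - xi) 0 = (xb - xi) * max (y - xa) 0 + (xi - xa) * max (y - xb) 0"
    using assms by (auto simp: max_def algebra_simps)
qed

lemma hinge_k:
  fixes xa xj xb k :: real
  assumes "xa < xj" "xj < xb"
  shows "(xb - xa) * max (xj - k) 0 \<le> (xb - xj) * max (xa - k) 0 + (xj - xa) * max (xb - k) 0"
    and "k \<le> xa \<or> xb \<le> k \<Longrightarrow>
         (xb - xa) * max (xj - k) 0 = (xb - xj) * max (xa - k) 0 + (xj - xa) * max (xb - k) 0"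
    and "xa < k \<Longrightarrow> k < xb \<Longrightarrow>
         (xb - xa) * max (xj - k) 0 < (xb - xj) * max (xa - k) 0 + (xj - xa) * max (xb - k) 0"
proof -
  show "(xb - xa) * max (xj - k) 0 \<le> (xb - xj) * max (xa - k) 0 + (xj - xa) * max (xb - k) 0"
  proof -
    have 1: "0 \<le> (k - xa) * (xb - xj)" if "xa \<le> k" using that assms by simp
    have 2: "0 \<le> (xj - xa) * (xb - k)" if "k \<le> xb" using that assms by simp
    show ?thesis
      using assms 1 2 by (cases "k \<le> xa"; cases "k \<le> xj"; cases "k \<le> xb")
        (auto simp: max_def algebra_simps)
  qed
  show "k \<le> xa \<or> xb \<le> k \<Longrightarrow>
         (xb - xa) * max (xj - k) 0 = (xb - xj) * max (xa - k) 0 + (xj - xa) * max (xb - k) 0"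
    using assms by (auto simp: max_def algebra_simps)
  show "xa < k \<Longrightarrow> k < xb \<Longrightarrow>
         (xb - xa) * max (xj - k) 0 < (xb - xj) * max (xa - k) 0 + (xj - xa) * max (xb - k) 0"
  proof -
    assume k: "xa < k" "k < xb"
    have 1: "0 < (k - xa) * (xb - xj)" using k assms by simp
    have 2: "0 < (xj - xa) * (xb - k)" using k assms by simp
    show ?thesis
      using assms k 1 2 by (cases "k \<le> xj") (auto simp: max_def algebra_simps)
  qed
qed

locale grid =
  fixes x :: "nat \<Rightarrow> real" and n :: nat
  assumes xs: "\<And>i. i < n \<Longrightarrow> x i < x (Suc i)"
begin

lemma x_less: "i < j \<Longrightarrow> j \<le> n \<Longrightarrow> x i < x j"
proof (induction j)
  case 0 then show ?case by simp
next
  case (Suc j)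
  then show ?case using xs[of j] by (cases "i = j") auto
qed

lemma x_le: "i \<le> j \<Longrightarrow> j \<le> n \<Longrightarrow> x i \<le> x j"
  using x_less[of i j] by (cases "i = j") auto

lemma x_less_iff: "i \<le> n \<Longrightarrow> j \<le> n \<Longrightarrow> x i < x j \<longleftrightarrow> i < j"
  by (meson not_le x_le x_less)

lemma x_le_iff: "i \<le> n \<Longrightarrow> j \<le> n \<Longrightarrow> x i \<le> x j \<longleftrightarrow> i \<le> j"
  by (meson not_le x_le x_less)

lemma x_eq_iff: "i \<le> n \<Longrightarrow> j \<le> n \<Longrightarrow> x i = x j \<longleftrightarrow> i = j"
  using x_le_iff[of i j] x_le_iff[of j i] by auto

lemma x_inj: "inj_on x {..n}"
  by (auto simp: inj_on_def x_eq_iff)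

lemma int_grid:
  fixes f :: "real \<Rightarrow> real"
  assumes "set_pmf p \<subseteq> x ` {..n}"
  shows "(\<integral>y. f y \<partial>measure_pmf p) = (\<Sum>l\<le>n. pmf p (x l) * f (x l))"
proof -
  have "(\<integral>y. f y \<partial>measure_pmf p) = (\<Sum>a\<in>x ` {..n}. f a * pmf p a)"
    by (rule integral_measure_pmf_real) (use assms in auto)
  also have "\<dots> = (\<Sum>l\<le>n. pmf p (x l) * f (x l))"
    by (subst sum.reindex[OF x_inj]) (simp add: mult_ac)
  finally show ?thesis .
qed

lemma sum_pmf_grid:
  assumes "set_pmf p \<subseteq> x ` {..n}"
  shows "(\<Sum>l\<le>n. pmf p (x l)) = 1"
  using int_grid[OF assms, of "\<lambda>_. 1"] by simp

lemma cl_top: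
  assumes "set_pmf p \<subseteq> x ` {..n}"
  shows "cl p (x n) = 0"
  unfolding cl_def int_grid[OF assms]
  by (intro sum.neutral) (auto simp: max_def x_le)

lemma sum_ge_eq: "(\<Sum>l\<le>n. if i \<le> l then g l else 0) = (\<Sum>l\<in>{i..n}. g l)" for g :: "nat \<Rightarrow> real"
proof -
  have "(\<Sum>l\<le>n. if i \<le> l then g l else 0) = (\<Sum>l\<in>{l\<in>{..n}. i \<le> l}. g l)"
    by (rule sum.inter_filter[symmetric]) simp
  also have "{l\<in>{..n}. i \<le> l} = {i..n}" by auto
  finally show ?thesis .
qed

lemma cl_tail:
  assumes "set_pmf p \<subseteq> x ` {..n}" "1 \<le> i" "i \<le> n"
  shows "cl p (x (i - 1)) - cl p (x i) = (x i - x (i - 1)) * (\<Sum>l\<in>{i..n}. pmf p (x l))"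
proof -
  have "cl p (x (i - 1)) - cl p (x i)
      = (\<Sum>l\<le>n. pmf p (x l) * (max (x l - x (i - 1)) 0 - max (x l - x i) 0))"
    unfolding cl_def int_grid[OF assms(1)] by (simp add: sum_subtractf algebra_simps)
  also have "\<dots> = (\<Sum>l\<le>n. if i \<le> l then (x i - x (i - 1)) * pmf p (x l) else 0)"
  proof (intro sum.cong refl)
    fix l assume l: "l \<in> {..n}"
    show "pmf p (x l) * (max (x l - x (i - 1)) 0 - max (x l - x i) 0)
        = (if i \<le> l then (x i - x (i - 1)) * pmf p (x l) else 0)"
    proof (cases "i \<le> l")
      case True
      then have "x i \<le> x l" "x (i - 1) \<le> x i" using l assms x_le by auto
      then show ?thesis using True by (simp add: max_def algebra_simps)
    next
      case False
      then have "x l \<le> x (i - 1)" "x (i - 1) \<le> x i" using l assms x_le by auto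
      then show ?thesis using False by (simp add: max_def)
    qed
  qed
  also have "\<dots> = (x i - x (i - 1)) * (\<Sum>l\<in>{i..n}. pmf p (x l))"
    by (subst sum_ge_eq) (simp add: sum_distrib_left)
  finally show ?thesis .
qed

lemma eq_from_calls:
  assumes p: "set_pmf p \<subseteq> x ` {..n}" and q: "set_pmf q \<subseteq> x ` {..n}"
    and eq: "\<And>i. i \<le> n \<Longrightarrow> cl p (x i) = cl q (x i)"
  shows "p = q"
proof -
  define t where "t r i = (\<Sum>l\<in>{i..n}. pmf r (x l))" for r i
  have tq: "t p i = t q i" if "i \<le> n" for i
  proof (cases "i = 0")
    case True
    have "{0..n} = {..n}" by auto
    then show ?thesis using True sum_pmf_grid[OF p] sum_pmf_grid[OF q] by (simp add: t_def)
  next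
    case False
    have pos: "x i - x (i - 1) > 0" using x_less[of "i - 1" i] False that by simp
    have "(x i - x (i - 1)) * t p i = cl p (x (i - 1)) - cl p (x i)"
      using cl_tail[OF p, of i] False that by (simp add: t_def)
    also have "\<dots> = cl q (x (i - 1)) - cl q (x i)" using eq[of i] eq[of "i - 1"] that by simp
    also have "\<dots> = (x i - x (i - 1)) * t q i"
      using cl_tail[OF q, of i] False that by (simp add: t_def)
    finally have "(x i - x (i - 1)) * t p i = (x i - x (i - 1)) * t q i" .
    then show ?thesis using pos by simp
  qed
  have tS: "t r (Suc n) = 0" for r by (simp add: t_def)
  have tsplit: "pmf r (x m) = t r m - t r (Suc m)" if "m \<le> n" for r m
  proof -
    have "{m..n} = insert m {Suc m..n}" using that by auto
    then show ?thesis by (simp add: t_def)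
  qed
  show ?thesis
  proof (rule pmf_eqI)
    fix z
    show "pmf p z = pmf q z"
    proof (cases "z \<in> x ` {..n}")
      case True
      then obtain m where m: "m \<le> n" "z = x m" by auto
      have "t p (Suc m) = t q (Suc m)"
      proof (cases "Suc m \<le> n")
        case True then show ?thesis using tq by simp
      next
        case False then have "Suc m = Suc n" using m by simp
        then show ?thesis using tS by simp
      qed
      then show ?thesis using m tsplit[of m p] tsplit[of m q] tq[of m] by simp
    next
      case False
      then have "z \<notin> set_pmf p" "z \<notin> set_pmf q" using p q by auto
      then show ?thesis by (simp add: set_pmf_iff)
    qed
  qed
qed

end

lemma bary_aux:
  fixes u d A B C :: real
  assumes "d \<noteq> 0"
  shows "(u / d) * A + (1 - u / d) * B - C = (u * A + (d - u) * B - d * C) / d"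
  using assms by (simp add: field_simps)

context grid
begin

definition Sset :: "real pmf \<Rightarrow> real pmf \<Rightarrow> nat set" where
  "Sset p q = {i. i \<le> n \<and> cl p (x i) < cl q (x i)}"

definition Tset :: "real pmf \<Rightarrow> real pmf \<Rightarrow> nat set" where
  "Tset p q = {i \<in> Sset p q. 0 < pmf p (x i)}"

lemma finite_Sset: "finite (Sset p q)" unfolding Sset_def by simp
lemma finite_Tset: "finite (Tset p q)" unfolding Tset_def using finite_Sset by simp

lemma step:
  assumes p: "set_pmf p \<subseteq> x ` {..n}" and q: "set_pmf q \<subseteq> x ` {..n}"
    and le: "\<forall>i\<le>n. cl p (x i) \<le> cl q (x i)" and eq0: "cl p (x 0) = cl q (x 0)"
    and ne: "Sset p q \<noteq> {}"
  shows "\<exists>\<kappa>1. (\<forall>y\<in>set_pmf p. set_pmf (\<kappa>1 y) \<subseteq> x ` {..n} \<and> (\<integral>z. z \<partial>measure_pmf (\<kappa>1 y)) = y) \<and>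
     (\<forall>i\<le>n. cl (bind_pmf p \<kappa>1) (x i) \<le> cl q (x i)) \<and> cl (bind_pmf p \<kappa>1) (x 0) = cl q (x 0) \<and>
     card (Sset (bind_pmf p \<kappa>1) q) + card (Tset (bind_pmf p \<kappa>1) q) < card (Sset p q) + card (Tset p q)"
proof -
  define D where "D i = cl q (x i) - cl p (x i)" for i
  have D0: "D 0 = 0" using eq0 by (simp add: D_def)
  have Dn: "D n = 0" using cl_top[OF p] cl_top[OF q] by (simp add: D_def)
  have Dge: "i \<le> n \<Longrightarrow> 0 \<le> D i" for i using le by (simp add: D_def)
  obtain i0 where i0: "i0 \<le> n" "0 < D i0" using ne by (auto simp: Sset_def D_def)
  have i00: "0 < i0" using i0 D0 by (cases "i0 = 0") auto
  have i0n: "i0 < n" using i0 Dn by (cases "i0 = n") auto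
  define A where "A = {i. i < i0 \<and> D i = 0}"
  define a where "a = Max A"
  have finA: "finite A" unfolding A_def by simp
  have "0 \<in> A" using i00 D0 by (simp add: A_def)
  then have "a \<in> A" unfolding a_def using finA by (intro Max_in) auto
  then have a: "a < i0" "D a = 0" by (auto simp: A_def)
  have a_max: "i < i0 \<Longrightarrow> D i = 0 \<Longrightarrow> i \<le> a" for i
    unfolding a_def using finA by (intro Max_ge) (auto simp: A_def)
  define B where "B = {i. i0 < i \<and> i \<le> n \<and> D i = 0}"
  define b where "b = Min B"
  have finB: "finite B" unfolding B_def by simp
  have "n \<in> B" using i0n Dn by (simp add: B_def)
  then have "b \<in> B" unfolding b_def using finB by (intro Min_in) auto
  then have b: "i0 < b" "b \<le> n" "D b = 0" by (auto simp: B_def)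
  have b_min: "i0 < i \<Longrightarrow> i \<le> n \<Longrightarrow> D i = 0 \<Longrightarrow> b \<le> i" for i
    unfolding b_def using finB by (intro Min_le) (auto simp: B_def)
  have Dpos: "0 < D i" if "a < i" "i < b" for i
  proof -
    have "i \<le> n" using that b by simp
    then have "0 \<le> D i" by (rule Dge)
    moreover have "D i \<noteq> 0"
    proof
      assume "D i = 0"
      show False
      proof (cases "i < i0")
        case True then show False using a_max[of i] \<open>D i = 0\<close> that by simp
      next
        case False
        show False
        proof (cases "i = i0")
          case True then show False using i0 \<open>D i = 0\<close> by simp
        next
          case False
          then have "i0 < i" using \<open>\<not> i < i0\<close> by simp
          then show False using b_min[of i] \<open>D i = 0\<close> \<open>i \<le> n\<close> that by simp
        qed
      qed
    qed
    ultimately show ?thesis by simp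
  qed
  have xab: "x a < x i0" "x i0 < x b" using x_less a b i0 by auto
  obtain j where j: "a < j" "j < b" "0 < pmf p (x j)"
  proof (rule ccontr)
    note ob = that
    assume nt: "\<not> thesis"
    have nom: "pmf p (x l) = 0" if "a < l" "l < b" for l
    proof -
      have "\<not> 0 < pmf p (x l)" using ob[of l] nt that by blast
      then show ?thesis using pmf_nonneg[of p "x l"] by linarith
    qed
    have eqp: "(x b - x a) * cl p (x i0) = (x b - x i0) * cl p (x a) + (x i0 - x a) * cl p (x b)"
    proof -
      have "(x b - x a) * cl p (x i0) = (\<Sum>l\<le>n. pmf p (x l) * ((x b - x a) * max (x l - x i0) 0))"
        unfolding cl_def int_grid[OF p] by (simp add: sum_distrib_left mult_ac)
      also have "\<dots> = (\<Sum>l\<le>n. pmf p (x l) * ((x b - x i0) * max (x l - x a) 0 + (x i0 - x a) * max (x l - x b) 0))"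
      proof (intro sum.cong refl)
        fix l assume l: "l \<in> {..n}"
        show "pmf p (x l) * ((x b - x a) * max (x l - x i0) 0) =
              pmf p (x l) * ((x b - x i0) * max (x l - x a) 0 + (x i0 - x a) * max (x l - x b) 0)"
        proof (cases "a < l \<and> l < b")
          case True then show ?thesis using nom by simp
        next
          case False
          then have "x l \<le> x a \<or> x b \<le> x l" using l b a i0 x_le[of l a] x_le[of b l] by (auto simp: not_less)
          then show ?thesis using hinge_y(2)[OF xab, of "x l"] by simp
        qed
      qed
      also have "(x b - x i0) * cl p (x a) + (x i0 - x a) * cl p (x b) = \<dots>"
        unfolding cl_def int_grid[OF p] sum_distrib_left sum.distrib[symmetric]
        by (intro sum.cong refl) (simp add: algebra_simps)
      hence "\<dots> = (x b - x i0) * cl p (x a) + (x i0 - x a) * cl p (x b)" by simp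
      finally show ?thesis .
    qed
    have leq: "(x b - x a) * cl q (x i0) \<le> (x b - x i0) * cl q (x a) + (x i0 - x a) * cl q (x b)"
    proof -
      have "(x b - x a) * cl q (x i0) = (\<Sum>l\<le>n. pmf q (x l) * ((x b - x a) * max (x l - x i0) 0))"
        unfolding cl_def int_grid[OF q] by (simp add: sum_distrib_left mult_ac)
      also have "\<dots> \<le> (\<Sum>l\<le>n. pmf q (x l) * ((x b - x i0) * max (x l - x a) 0 + (x i0 - x a) * max (x l - x b) 0))"
        by (intro sum_mono mult_left_mono hinge_y(1)[OF xab]) simp
      also have "(x b - x i0) * cl q (x a) + (x i0 - x a) * cl q (x b) = \<dots>"
        unfolding cl_def int_grid[OF q] sum_distrib_left sum.distrib[symmetric]
        by (intro sum.cong refl) (simp add: algebra_simps)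
      hence "\<dots> = (x b - x i0) * cl q (x a) + (x i0 - x a) * cl q (x b)" by simp
      finally show ?thesis .
    qed
    have "(x b - x a) * D i0 \<le> (x b - x i0) * D a + (x i0 - x a) * D b"
      using eqp leq by (simp add: D_def algebra_simps)
    then have "(x b - x a) * D i0 \<le> 0" using a b by simp
    moreover have "0 < (x b - x a) * D i0" using xab i0 by simp
    ultimately show False by simp
  qed
  have jn: "j \<le> n" "a \<le> n" using j b by auto
  have xj: "x a < x j" "x j < x b" using x_less j b by auto
  define wj where "wj = pmf p (x j)"
  define T where "T k = ((x b - x j) * max (x a - k) 0 + (x j - x a) * max (x b - k) 0
      - (x b - x a) * max (x j - k) 0) / (x b - x a)" for k
  have T0: "T (x i) = 0" if "i \<le> n" "i \<le> a \<or> b \<le> i" for i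
  proof -
    have "x i \<le> x a \<or> x b \<le> x i" using that x_le b jn by auto
    then show ?thesis using hinge_k(2)[OF xj, of "x i"] by (simp add: T_def)
  qed
  have Tpos: "0 < T (x i)" if "a < i" "i < b" for i
  proof -
    have "x a < x i" "x i < x b" using that x_less b by auto
    then show ?thesis using hinge_k(3)[OF xj, of "x i"] xj by (simp add: T_def)
  qed
  have Tge: "0 \<le> T k" for k using hinge_k(1)[OF xj, of k] xj by (simp add: T_def)
  define \<theta> where "\<theta> = Min (insert wj ((\<lambda>i. D i / T (x i)) ` {a<..<b}))"
  have finth: "finite (insert wj ((\<lambda>i. D i / T (x i)) ` {a<..<b}))" by simp
  have th_le_wj: "\<theta> \<le> wj" unfolding \<theta>_def using finth by (intro Min_le) auto
  have th_le_D: "\<theta> * T (x i) \<le> D i" if "a < i" "i < b" for i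
  proof -
    have "\<theta> \<le> D i / T (x i)" unfolding \<theta>_def using finth that by (intro Min_le) auto
    then show ?thesis using Tpos[OF that] by (simp add: pos_le_divide_eq)
  qed
  have th_pos: "0 < \<theta>" unfolding \<theta>_def using finth j Dpos Tpos
    by (subst Min_gr_iff) (auto simp: wj_def)
  have th_cases: "\<theta> = wj \<or> (\<exists>i. a < i \<and> i < b \<and> \<theta> = D i / T (x i))"
  proof -
    have "\<theta> \<in> insert wj ((\<lambda>i. D i / T (x i)) ` {a<..<b})" unfolding \<theta>_def using finth
      by (intro Min_in) auto
    then show ?thesis by auto
  qed
  define th where "th = \<theta> / wj"
  have wj_pos: "0 < wj" using j by (simp add: wj_def)
  have th: "0 \<le> th" "th \<le> 1" using th_pos th_le_wj wj_pos by (auto simp: th_def)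
  have th_wj: "wj * th = \<theta>" using wj_pos by (simp add: th_def)
  define \<omega> where "\<omega> = (x b - x j) / (x b - x a)"
  have om: "0 \<le> \<omega>" "\<omega> \<le> 1" using xj by (auto simp: \<omega>_def)
  have om_bary: "\<omega> * x a + (1 - \<omega>) * x b = x j"
  proof -
    have "\<omega> * (x b - x a) = x b - x j" using xj by (simp add: \<omega>_def)
    then have e: "\<omega> * x b - \<omega> * x a = x b - x j" by (simp add: algebra_simps)
    show ?thesis using e by (simp add: algebra_simps)
  qed
  define K where "K = bind_pmf (bernoulli_pmf th) (\<lambda>c. if c then map_pmf (\<lambda>d. if d then x a else x b) (bernoulli_pmf \<omega>) else return_pmf (x j))"
  have finbool: "finite (set_pmf (r :: bool pmf))" for r by (rule finite_subset[of _ UNIV]) auto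
  have intK: "(\<integral>z. f z \<partial>measure_pmf K) = f (x j) + th * (\<omega> * f (x a) + (1 - \<omega>) * f (x b) - f (x j))"
    for f :: "real \<Rightarrow> real"
  proof -
    have "(\<integral>z. f z \<partial>measure_pmf K) = (\<integral>c. (\<integral>z. f z \<partial>measure_pmf (if c then map_pmf (\<lambda>d. if d then x a else x b) (bernoulli_pmf \<omega>) else return_pmf (x j))) \<partial>measure_pmf (bernoulli_pmf th))"
      unfolding K_def by (rule integral_bind_pmf_fin) (auto simp: finbool)
    also have "\<dots> = f (x j) + th * (\<omega> * f (x a) + (1 - \<omega>) * f (x b) - f (x j))"
      using th om by (simp add: algebra_simps)
    finally show ?thesis .
  qed
  have setK: "set_pmf K \<subseteq> {x a, x b, x j}" unfolding K_def by (auto split: if_splits)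
  define \<kappa>1 where "\<kappa>1 y = (if y = x j then K else return_pmf y)" for y
  have int\<kappa>: "(\<integral>z. f z \<partial>measure_pmf (\<kappa>1 y)) = f y + (if y = x j then th * (\<omega> * f (x a) + (1 - \<omega>) * f (x b) - f (x j)) else 0)"
    for f :: "real \<Rightarrow> real" and y
    by (simp add: \<kappa>1_def intK)
  have set\<kappa>: "set_pmf (\<kappa>1 y) \<subseteq> x ` {..n}" if "y \<in> x ` {..n}" for y
    using that setK jn b by (auto simp: \<kappa>1_def)
  have finp: "finite (set_pmf p)" using p by (rule finite_subset) simp
  have p'int: "(\<integral>z. f z \<partial>measure_pmf (bind_pmf p \<kappa>1)) = (\<integral>z. f z \<partial>measure_pmf p) + \<theta> * (\<omega> * f (x a) + (1 - \<omega>) * f (x b) - f (x j))"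
    for f :: "real \<Rightarrow> real"
  proof -
    have "(\<integral>z. f z \<partial>measure_pmf (bind_pmf p \<kappa>1)) = (\<integral>y. (\<integral>z. f z \<partial>measure_pmf (\<kappa>1 y)) \<partial>measure_pmf p)"
    proof (rule integral_bind_pmf_fin[OF finp])
      fix y assume "y \<in> set_pmf p"
      then have "set_pmf (\<kappa>1 y) \<subseteq> x ` {..n}" using set\<kappa>[of y] p by blast
      then show "finite (set_pmf (\<kappa>1 y))" by (rule finite_subset) simp
    qed
    also have "\<dots> = (\<Sum>l\<le>n. pmf p (x l) * (f (x l) + (if l = j then th * (\<omega> * f (x a) + (1 - \<omega>) * f (x b) - f (x j)) else 0)))"
      unfolding int_grid[OF p] int\<kappa> using jn by (intro sum.cong refl) (auto simp: x_eq_iff)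
    also have "\<dots> = (\<Sum>l\<le>n. pmf p (x l) * f (x l)) + wj * (th * (\<omega> * f (x a) + (1 - \<omega>) * f (x b) - f (x j)))"
      using jn by (simp add: algebra_simps sum.distrib if_distrib[of "\<lambda>t. pmf p (x _) * t"] wj_def cong: if_cong)
    also have "\<dots> = (\<integral>z. f z \<partial>measure_pmf p) + \<theta> * (\<omega> * f (x a) + (1 - \<omega>) * f (x b) - f (x j))"
      unfolding int_grid[OF p] using th_wj by (simp add: mult.assoc[symmetric])
    finally show ?thesis .
  qed
  have cl': "cl (bind_pmf p \<kappa>1) k = cl p k + \<theta> * T k" for k
  proof -
    have "\<omega> * max (x a - k) 0 + (1 - \<omega>) * max (x b - k) 0 - max (x j - k) 0 = T k"
    proof -
      have nz: "x b - x a \<noteq> 0" using xj by simp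
      have gen: "\<omega> * A + (1 - \<omega>) * B - C = ((x b - x j) * A + (x j - x a) * B - (x b - x a) * C) / (x b - x a)"
        for A B C :: real
      proof -
        have "\<omega> * A + (1 - \<omega>) * B - C = ((x b - x j) * A + ((x b - x a) - (x b - x j)) * B - (x b - x a) * C) / (x b - x a)"
          unfolding \<omega>_def by (rule bary_aux[OF nz])
        then show ?thesis by simp
      qed
      show ?thesis unfolding T_def gen ..
    qed
    then show ?thesis unfolding cl_def p'int by simp
  qed
  have pmf': "pmf (bind_pmf p \<kappa>1) z = pmf p z + \<theta> * (\<omega> * indicator {z} (x a) + (1 - \<omega>) * indicator {z} (x b) - indicator {z} (x j))" for z
    unfolding pmf_as_integral p'int ..
  let ?p' = "bind_pmf p \<kappa>1"
  have c1: "\<forall>y\<in>set_pmf p. set_pmf (\<kappa>1 y) \<subseteq> x ` {..n} \<and> (\<integral>z. z \<partial>measure_pmf (\<kappa>1 y)) = y"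
  proof
    fix y assume y: "y \<in> set_pmf p"
    then have "set_pmf (\<kappa>1 y) \<subseteq> x ` {..n}" using set\<kappa>[of y] p by blast
    moreover have "(\<integral>z. z \<partial>measure_pmf (\<kappa>1 y)) = y" using int\<kappa>[where f="\<lambda>z. z"] om_bary by simp
    ultimately show "set_pmf (\<kappa>1 y) \<subseteq> x ` {..n} \<and> (\<integral>z. z \<partial>measure_pmf (\<kappa>1 y)) = y" by simp
  qed
  have c2: "\<forall>i\<le>n. cl ?p' (x i) \<le> cl q (x i)"
  proof (intro allI impI)
    fix i assume i: "i \<le> n"
    show "cl ?p' (x i) \<le> cl q (x i)"
    proof (cases "a < i \<and> i < b")
      case True then show ?thesis using th_le_D[of i] cl' by (simp add: D_def)
    next
      case False then show ?thesis using T0[of i] i cl' le by auto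
    qed
  qed
  have c3: "cl ?p' (x 0) = cl q (x 0)" using cl' T0[of 0] eq0 by simp
  have SS: "Sset ?p' q \<subseteq> Sset p q"
    using cl' Tge th_pos by (auto simp: Sset_def intro: order.strict_trans1[rotated] add_increasing2[OF mult_nonneg_nonneg])
  have aS: "a \<notin> Sset ?p' q" "b \<notin> Sset ?p' q"
    using cl'[of "x a"] cl'[of "x b"] T0[of a] T0[of b] a b jn by (auto simp: Sset_def D_def)
  have TT: "Tset ?p' q \<subseteq> Tset p q"
  proof
    fix i assume i: "i \<in> Tset ?p' q"
    then have iS: "i \<in> Sset ?p' q" and pos: "0 < pmf ?p' (x i)" by (auto simp: Tset_def)
    have iab: "i \<noteq> a" "i \<noteq> b" "i \<le> n" using aS iS by (auto simp: Sset_def)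
    then have "pmf ?p' (x i) \<le> pmf p (x i)"
      using pmf'[of "x i"] th_pos jn b x_eq_iff by (auto simp: indicator_def)
    then show "i \<in> Tset p q" using pos iS SS by (auto simp: Tset_def)
  qed
  have c4: "card (Sset ?p' q) + card (Tset ?p' q) < card (Sset p q) + card (Tset p q)"
    using th_cases
  proof
    assume "\<theta> = wj"
    have "j \<in> Tset p q" using jn Dpos[of j] j by (auto simp: Tset_def Sset_def D_def)
    moreover have "j \<notin> Tset ?p' q"
      using pmf'[of "x j"] \<open>\<theta> = wj\<close> jn b j x_eq_iff by (auto simp: Tset_def indicator_def wj_def)
    ultimately have "Tset ?p' q \<subset> Tset p q" using TT by auto
    then have "card (Tset ?p' q) < card (Tset p q)" by (rule psubset_card_mono[OF finite_Tset])
    moreover have "card (Sset ?p' q) \<le> card (Sset p q)" by (rule card_mono[OF finite_Sset SS])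
    ultimately show ?thesis by simp
  next
    assume "\<exists>i. a < i \<and> i < b \<and> \<theta> = D i / T (x i)"
    then obtain i where i: "a < i" "i < b" "\<theta> = D i / T (x i)" by auto
    have "i \<in> Sset p q" using i b Dpos[of i] by (auto simp: Sset_def D_def)
    moreover have "i \<notin> Sset ?p' q"
      using cl'[of "x i"] i Tpos[of i] by (auto simp: Sset_def D_def)
    ultimately have "Sset ?p' q \<subset> Sset p q" using SS by auto
    then have "card (Sset ?p' q) < card (Sset p q)" by (rule psubset_card_mono[OF finite_Sset])
    moreover have "card (Tset ?p' q) \<le> card (Tset p q)" by (rule card_mono[OF finite_Tset TT])
    ultimately show ?thesis by simp
  qed
  show ?thesis using c1 c2 c3 c4 by blast
qed

end

context grid
begin

lemma strassen:
  assumes q: "set_pmf q \<subseteq> x ` {..n}"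
  shows "set_pmf p \<subseteq> x ` {..n} \<Longrightarrow> \<forall>i\<le>n. cl p (x i) \<le> cl q (x i) \<Longrightarrow> cl p (x 0) = cl q (x 0) \<Longrightarrow>
    \<exists>\<kappa>. (\<forall>y\<in>set_pmf p. set_pmf (\<kappa> y) \<subseteq> x ` {..n} \<and> (\<integral>z. z \<partial>measure_pmf (\<kappa> y)) = y) \<and> bind_pmf p \<kappa> = q"
proof (induction "card (Sset p q) + card (Tset p q)" arbitrary: p rule: less_induct)
  case less
  show ?case
  proof (cases "Sset p q = {}")
    case True
    then have "\<And>i. i \<le> n \<Longrightarrow> cl p (x i) = cl q (x i)" using less.prems(2)
      by (force simp: Sset_def)
    then have pq: "p = q" by (rule eq_from_calls[OF less.prems(1) q])
    have "\<forall>y\<in>set_pmf p. set_pmf (return_pmf y) \<subseteq> x ` {..n} \<and> (\<integral>z. z \<partial>measure_pmf (return_pmf y)) = y"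
      using less.prems(1) by auto
    moreover have "bind_pmf p return_pmf = q" using pq by (simp add: bind_return_pmf')
    ultimately show ?thesis by blast
  next
    case False
    obtain \<kappa>1 where k1: "\<forall>y\<in>set_pmf p. set_pmf (\<kappa>1 y) \<subseteq> x ` {..n} \<and> (\<integral>z. z \<partial>measure_pmf (\<kappa>1 y)) = y"
      and le': "\<forall>i\<le>n. cl (bind_pmf p \<kappa>1) (x i) \<le> cl q (x i)"
      and eq': "cl (bind_pmf p \<kappa>1) (x 0) = cl q (x 0)"
      and lt: "card (Sset (bind_pmf p \<kappa>1) q) + card (Tset (bind_pmf p \<kappa>1) q) < card (Sset p q) + card (Tset p q)"
      using step[OF less.prems(1) q less.prems(2) less.prems(3) False] by blast
    have set': "set_pmf (bind_pmf p \<kappa>1) \<subseteq> x ` {..n}" using k1 by auto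
    obtain \<kappa>' where k': "\<forall>y\<in>set_pmf (bind_pmf p \<kappa>1). set_pmf (\<kappa>' y) \<subseteq> x ` {..n} \<and> (\<integral>z. z \<partial>measure_pmf (\<kappa>' y)) = y"
      and b': "bind_pmf (bind_pmf p \<kappa>1) \<kappa>' = q"
      using less.hyps[OF lt set' le' eq'] by blast
    define \<kappa> where "\<kappa> y = bind_pmf (\<kappa>1 y) \<kappa>'" for y
    have "\<forall>y\<in>set_pmf p. set_pmf (\<kappa> y) \<subseteq> x ` {..n} \<and> (\<integral>z. z \<partial>measure_pmf (\<kappa> y)) = y"
    proof
      fix y assume y: "y \<in> set_pmf p"
      have s1: "set_pmf (\<kappa>1 y) \<subseteq> set_pmf (bind_pmf p \<kappa>1)" using y by auto
      have "set_pmf (\<kappa> y) \<subseteq> x ` {..n}" unfolding \<kappa>_def using s1 k' by (simp only: set_bind_pmf) blast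
      moreover have "(\<integral>z. z \<partial>measure_pmf (\<kappa> y)) = y"
      proof -
        have fin1: "finite (set_pmf (\<kappa>1 y))" using k1 y by (meson finite_atMost finite_imageI finite_subset)
        have "(\<integral>z. z \<partial>measure_pmf (\<kappa> y)) = (\<integral>v. (\<integral>z. z \<partial>measure_pmf (\<kappa>' v)) \<partial>measure_pmf (\<kappa>1 y))"
          unfolding \<kappa>_def
        proof (rule integral_bind_pmf_fin[OF fin1])
          fix v assume "v \<in> set_pmf (\<kappa>1 y)"
          then show "finite (set_pmf (\<kappa>' v))" using s1 k' by (meson finite_atMost finite_imageI finite_subset subsetD)
        qed
        also have "\<dots> = (\<integral>v. v \<partial>measure_pmf (\<kappa>1 y))"
          by (intro integral_cong_AE) (use s1 k' in \<open>auto simp: AE_measure_pmf_iff\<close>)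
        also have "\<dots> = y" using k1 y by simp
        finally show ?thesis .
      qed
      ultimately show "set_pmf (\<kappa> y) \<subseteq> x ` {..n} \<and> (\<integral>z. z \<partial>measure_pmf (\<kappa> y)) = y" by simp
    qed
    moreover have "bind_pmf p \<kappa> = q" using b' by (simp add: \<kappa>_def[abs_def] bind_assoc_pmf)
    ultimately show ?thesis by blast
  qed
qed

end

locale setting =
  fixes N M :: nat
    and Ks :: "nat \<Rightarrow> real" and Ts :: "nat \<Rightarrow> real"
    and C :: "nat \<Rightarrow> nat \<Rightarrow> real"
    and \<alpha> :: "nat \<Rightarrow> real \<Rightarrow> real"
    and Cs :: "real \<Rightarrow> real \<Rightarrow> real"
  assumes hM: "1 \<le> M"
    and hK0: "Ks 0 = 0" and hK: "\<And>i. i < N \<Longrightarrow> Ks i < Ks (Suc i)"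
    and hT0: "Ts 0 = 0" and hT: "\<And>j. j < M \<Longrightarrow> Ts j < Ts (Suc j)"
    and hC0: "\<And>j. 1 \<le> j \<Longrightarrow> j \<le> M \<Longrightarrow> C j 0 = 1"
    and hdC0: "\<And>j. 1 \<le> j \<Longrightarrow> j \<le> M \<Longrightarrow> dC N Ks C j 0 = -1"
    and hCN: "\<And>j. 1 \<le> j \<Longrightarrow> j \<le> M \<Longrightarrow> C j N = 0"
    and hconv: "\<And>j i. 1 \<le> j \<Longrightarrow> j \<le> M \<Longrightarrow> 1 \<le> i \<Longrightarrow> i \<le> N \<Longrightarrow>
                  dC N Ks C j (i - 1) \<le> dC N Ks C j i"
    and hcal: "\<And>j i. 1 \<le> j \<Longrightarrow> j < M \<Longrightarrow> i \<le> N \<Longrightarrow> C j i \<le> C (Suc j) i"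
    and h\<alpha>mono: "\<And>j. j < M \<Longrightarrow> mono_on {Ts j..Ts (Suc j)} (\<alpha> j)"
    and h\<alpha>range: "\<And>j t. j < M \<Longrightarrow> t \<in> {Ts j..Ts (Suc j)} \<Longrightarrow> \<alpha> j t \<in> {0..1}"
    and h\<alpha>0: "\<And>j. j < M \<Longrightarrow> \<alpha> j (Ts j) = 0"
    and h\<alpha>1: "\<And>j. j < M \<Longrightarrow> \<alpha> j (Ts (Suc j)) = 1"
    and hCs: "\<And>j t k. j < M \<Longrightarrow> t \<in> {Ts j..Ts (Suc j)} \<Longrightarrow> 0 \<le> k \<Longrightarrow>
               Cs t k = \<alpha> j t * Cbar N Ks C (Suc j) k + (1 - \<alpha> j t) * Cbar N Ks C j k"
begin

sublocale G: grid Ks N by unfold_locales (rule hK)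

lemma N_pos: "0 < N"
proof (rule ccontr)
  assume "\<not> 0 < N"
  then have "dC N Ks C 1 0 = 0" by (simp add: dC_def)
  then show False using hdC0[of 1] hM by simp
qed

abbreviation d :: "nat \<Rightarrow> nat \<Rightarrow> real" where "d j i \<equiv> dC N Ks C j i"

definition wt :: "nat \<Rightarrow> nat \<Rightarrow> real" where "wt j i = d j (Suc i) - d j i"

definition fw :: "nat \<Rightarrow> real \<Rightarrow> real" where
  "fw j y = (\<Sum>i<N. if y = Ks (Suc i) then wt j i else 0)"

definition mu :: "nat \<Rightarrow> real pmf" where
  "mu j = (if j = 0 then return_pmf 1 else embed_pmf (fw j))"

lemma wt_nonneg: "1 \<le> j \<Longrightarrow> j \<le> M \<Longrightarrow> i < N \<Longrightarrow> 0 \<le> wt j i"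
  using hconv[of j "Suc i"] by (simp add: wt_def)

lemma fw_at: "i < N \<Longrightarrow> fw j (Ks (Suc i)) = wt j i"
proof -
  assume i: "i < N"
  have "fw j (Ks (Suc i)) = (\<Sum>l<N. if l = i then wt j l else 0)"
    unfolding fw_def using i by (intro sum.cong refl) (auto simp: G.x_eq_iff)
  then show ?thesis using i by simp
qed

lemma fw_out: "y \<notin> Ks ` Suc ` {..<N} \<Longrightarrow> fw j y = 0"
  unfolding fw_def by (intro sum.neutral) auto

lemma fw_nonneg: "1 \<le> j \<Longrightarrow> j \<le> M \<Longrightarrow> 0 \<le> fw j y"
  unfolding fw_def by (intro sum_nonneg) (auto intro: wt_nonneg)

lemma sum_wt: "1 \<le> j \<Longrightarrow> j \<le> M \<Longrightarrow> (\<Sum>i<N. wt j i) = 1"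
  unfolding wt_def sum_lessThan_telescope using hdC0[of j] by (simp add: dC_def)

lemma inj_Ks_Suc: "inj_on (\<lambda>i. Ks (Suc i)) {..<N}"
  by (auto simp: inj_on_def G.x_eq_iff)

lemma fw_prob: "1 \<le> j \<Longrightarrow> j \<le> M \<Longrightarrow> (\<integral>\<^sup>+y. ennreal (fw j y) \<partial>count_space UNIV) = 1"
proof -
  assume j: "1 \<le> j" "j \<le> M"
  have "(\<integral>\<^sup>+y. ennreal (fw j y) \<partial>count_space UNIV) = (\<Sum>y\<in>(\<lambda>i. Ks (Suc i)) ` {..<N}. ennreal (fw j y))"
    by (rule nn_integral_count_space') (auto simp: fw_out image_image)
  also have "\<dots> = (\<Sum>i<N. ennreal (fw j (Ks (Suc i))))"
    by (subst sum.reindex[OF inj_Ks_Suc]) simp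
  also have "\<dots> = ennreal (\<Sum>i<N. wt j i)"
    using j by (subst sum_ennreal) (auto simp: fw_at wt_nonneg)
  also have "\<dots> = 1" using sum_wt[OF j] by simp
  finally show ?thesis .
qed

lemma pmf_mu: "1 \<le> j \<Longrightarrow> j \<le> M \<Longrightarrow> pmf (mu j) y = fw j y"
  unfolding mu_def using fw_nonneg fw_prob by (simp add: pmf_embed_pmf)

lemma set_mu: "1 \<le> j \<Longrightarrow> j \<le> M \<Longrightarrow> set_pmf (mu j) \<subseteq> Ks ` Suc ` {..<N}"
proof
  fix y assume j: "1 \<le> j" "j \<le> M" and y: "y \<in> set_pmf (mu j)"
  then have "fw j y \<noteq> 0" using pmf_mu[OF j] by (simp add: set_pmf_iff)
  then show "y \<in> Ks ` Suc ` {..<N}" using fw_out by blast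
qed

lemma set_mu_grid: "1 \<le> j \<Longrightarrow> j \<le> M \<Longrightarrow> set_pmf (mu j) \<subseteq> Ks ` {..N}"
  using set_mu by fastforce

lemma Ks_pos: "1 \<le> i \<Longrightarrow> i \<le> N \<Longrightarrow> 0 < Ks i"
  using G.x_less[of 0 i] hK0 by simp

lemma set_mu_pos: "j \<le> M \<Longrightarrow> y \<in> set_pmf (mu j) \<Longrightarrow> 0 < y"
  using set_mu[of j] Ks_pos by (cases "j = 0") (auto simp: mu_def)

lemma int_mu: "1 \<le> j \<Longrightarrow> j \<le> M \<Longrightarrow> (\<integral>y. g y \<partial>measure_pmf (mu j)) = (\<Sum>i<N. wt j i * g (Ks (Suc i)))"
proof -
  assume j: "1 \<le> j" "j \<le> M"
  have "(\<integral>y. g y \<partial>measure_pmf (mu j)) = (\<Sum>y\<in>(\<lambda>i. Ks (Suc i)) ` {..<N}. g y * pmf (mu j) y)"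
    by (rule integral_measure_pmf_real) (use set_mu[OF j] in \<open>auto simp: image_image\<close>)
  also have "\<dots> = (\<Sum>i<N. wt j i * g (Ks (Suc i)))"
    by (subst sum.reindex[OF inj_Ks_Suc]) (simp add: pmf_mu[OF j] fw_at mult.commute)
  finally show ?thesis .
qed

lemma abel:
  assumes j: "1 \<le> j" "j \<le> M" and l: "l < N"
  shows "(\<Sum>i\<in>{l..<N}. wt j i * (Ks (Suc i) - k)) = d j l * (k - Ks (Suc l)) + C j (Suc l)"
proof -
  have "l \<le> N - 1" using l by simp
  then show ?thesis
  proof (induction l rule: inc_induct)
    case base
    have "{N - 1..<N} = {N - 1}" using N_pos by auto
    moreover have "d j N = 0" by (simp add: dC_def)
    moreover have "Suc (N - 1) = N" using N_pos by simp
    ultimately show ?case using hCN[OF j] by (simp add: wt_def algebra_simps)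
  next
    case (step m)
    have m: "Suc m < N" using step by simp
    have split: "{m..<N} = insert m {Suc m..<N}" using m by auto
    have dd: "d j (Suc m) * (Ks (Suc (Suc m)) - Ks (Suc m)) = C j (Suc (Suc m)) - C j (Suc m)"
      using m hK[of "Suc m"] by (simp add: dC_def)
    have "(\<Sum>i\<in>{m..<N}. wt j i * (Ks (Suc i) - k))
        = wt j m * (Ks (Suc m) - k) + (d j (Suc m) * (k - Ks (Suc (Suc m))) + C j (Suc (Suc m)))"
      unfolding split using step.IH by simp
    also have "\<dots> = d j m * (k - Ks (Suc m)) + C j (Suc m)"
      using dd by (simp add: wt_def algebra_simps)
    finally show ?case .
  qed
qed

lemma cl_mu:
  assumes j: "1 \<le> j" "j \<le> M" and k: "0 \<le> k"
  shows "cl (mu j) k = Cbar N Ks C j k"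
proof (cases "\<exists>i<N. Ks i \<le> k \<and> k < Ks (Suc i)")
  case True
  then obtain l where l: "l < N" "Ks l \<le> k" "k < Ks (Suc l)" by auto
  have the: "(THE i. i < N \<and> Ks i \<le> k \<and> k < Ks (Suc i)) = l"
  proof (rule the_equality)
    fix i assume i: "i < N \<and> Ks i \<le> k \<and> k < Ks (Suc i)"
    have "\<not> i < l"
    proof
      assume "i < l" then have "Ks (Suc i) \<le> Ks l" using l by (intro G.x_le) auto
      then show False using i l by simp
    qed
    moreover have "\<not> l < i"
    proof
      assume "l < i" then have "Ks (Suc l) \<le> Ks i" using i by (intro G.x_le) auto
      then show False using i l by simp
    qed
    ultimately show "i = l" by simp
  qed (use l in auto)
  have "cl (mu j) k = (\<Sum>i<N. wt j i * max (Ks (Suc i) - k) 0)"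
    unfolding cl_def by (rule int_mu[OF j])
  also have "\<dots> = (\<Sum>i<N. if l \<le> i then wt j i * (Ks (Suc i) - k) else 0)"
  proof (intro sum.cong refl)
    fix i assume i: "i \<in> {..<N}"
    show "wt j i * max (Ks (Suc i) - k) 0 = (if l \<le> i then wt j i * (Ks (Suc i) - k) else 0)"
    proof (cases "l \<le> i")
      case True
      then have "Ks (Suc l) \<le> Ks (Suc i)" using i by (intro G.x_le) auto
      then show ?thesis using True l by simp
    next
      case False
      then have "Ks (Suc i) \<le> Ks l" using l by (intro G.x_le) auto
      then show ?thesis using False l by simp
    qed
  qed
  also have "\<dots> = (\<Sum>i\<in>{l..<N}. wt j i * (Ks (Suc i) - k))"
  proof -
    have "(\<Sum>i<N. if l \<le> i then wt j i * (Ks (Suc i) - k) else 0) = (\<Sum>i\<in>{i\<in>{..<N}. l \<le> i}. wt j i * (Ks (Suc i) - k))"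
      by (rule sum.inter_filter[symmetric]) simp
    also have "{i\<in>{..<N}. l \<le> i} = {l..<N}" by auto
    finally show ?thesis .
  qed
  also have "\<dots> = d j l * (k - Ks (Suc l)) + C j (Suc l)" by (rule abel[OF j l(1)])
  also have "\<dots> = Cbar N Ks C j k"
    unfolding Cbar_def using True j the by (simp add: Let_def)
  finally show ?thesis .
next
  case False
  have kN: "Ks N \<le> k"
  proof (rule ccontr)
    assume kN: "\<not> Ks N \<le> k"
    define L where "L = Max {i. i \<le> N \<and> Ks i \<le> k}"
    have fin: "finite {i. i \<le> N \<and> Ks i \<le> k}" by simp
    have "0 \<in> {i. i \<le> N \<and> Ks i \<le> k}" using hK0 k by simp
    then have "L \<in> {i. i \<le> N \<and> Ks i \<le> k}" unfolding L_def using fin by (intro Max_in) auto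
    then have L: "L \<le> N" "Ks L \<le> k" by auto
    have LN: "L < N" using L kN by (cases "L = N") auto
    have "\<not> Ks (Suc L) \<le> k"
    proof
      assume "Ks (Suc L) \<le> k"
      then have "Suc L \<in> {i. i \<le> N \<and> Ks i \<le> k}" using LN by simp
      then have "Suc L \<le> L" unfolding L_def using fin by (intro Max_ge) auto
      then show False by simp
    qed
    then show False using False L LN by auto
  qed
  have "cl (mu j) k = (\<Sum>i<N. wt j i * max (Ks (Suc i) - k) 0)"
    unfolding cl_def by (rule int_mu[OF j])
  also have "\<dots> = 0"
  proof (intro sum.neutral ballI)
    fix i assume "i \<in> {..<N}"
    then have "Ks (Suc i) \<le> Ks N" by (intro G.x_le) auto
    then show "wt j i * max (Ks (Suc i) - k) 0 = 0" using kN by simp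
  qed
  also have "\<dots> = Cbar N Ks C j k" unfolding Cbar_def using False j by (simp only: if_False) simp
  finally show ?thesis .
qed

lemma cl_mu0: "cl (mu 0) k = Cbar N Ks C 0 k"
  by (simp add: cl_def mu_def Cbar_def max_def)

lemma Cbar_grid:
  assumes j: "1 \<le> j" "j \<le> M" and i: "i \<le> N"
  shows "Cbar N Ks C j (Ks i) = C j i"
proof (cases "i < N")
  case True
  have ex: "\<exists>l<N. Ks l \<le> Ks i \<and> Ks i < Ks (Suc l)" using True hK by auto
  have the: "(THE l. l < N \<and> Ks l \<le> Ks i \<and> Ks i < Ks (Suc l)) = i"
  proof (rule the_equality)
    fix l assume l: "l < N \<and> Ks l \<le> Ks i \<and> Ks i < Ks (Suc l)"
    then have "l \<le> i" "i < Suc l" using G.x_le_iff G.x_less_iff i by auto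
    then show "l = i" by simp
  qed (use True hK in auto)
  have dd: "d j i * (Ks (Suc i) - Ks i) = C j (Suc i) - C j i"
    using True hK[of i] by (simp add: dC_def)
  show ?thesis unfolding Cbar_def using j ex the True dd
    by (simp add: Let_def algebra_simps)
next
  case False
  then have iN: "i = N" using i by simp
  have ne: "\<not> (\<exists>l<N. Ks l \<le> Ks N \<and> Ks N < Ks (Suc l))"
  proof
    assume "\<exists>l<N. Ks l \<le> Ks N \<and> Ks N < Ks (Suc l)"
    then obtain l where "l < N" "Ks N < Ks (Suc l)" by auto
    moreover have "Ks (Suc l) \<le> Ks N" using \<open>l < N\<close> by (intro G.x_le) auto
    ultimately show False by simp
  qed
  have "j \<noteq> 0" using j by simp
  show ?thesis unfolding Cbar_def iN by (simp only: if_not_P[OF \<open>j \<noteq> 0\<close>] if_not_P[OF ne] hCN[OF j])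
qed

lemma cl_mu_grid: "1 \<le> j \<Longrightarrow> j \<le> M \<Longrightarrow> i \<le> N \<Longrightarrow> cl (mu j) (Ks i) = C j i"
  using cl_mu Cbar_grid G.x_le[of 0 i] hK0 by simp

lemma mean_mu: "j \<le> M \<Longrightarrow> (\<integral>y. y \<partial>measure_pmf (mu j)) = 1"
proof (cases "j = 0")
  case True then show ?thesis by (simp add: mu_def)
next
  case False
  assume jM: "j \<le> M"
  have j: "1 \<le> j" "j \<le> M" using False jM by auto
  have "(\<integral>y. y \<partial>measure_pmf (mu j)) = cl (mu j) (Ks 0)"
    unfolding cl_def hK0
  proof (intro integral_cong_AE)
    show "AE y in measure_pmf (mu j). y = max (y - 0) 0"
      unfolding AE_measure_pmf_iff
    proof
      fix y assume "y \<in> set_pmf (mu j)"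
      then have "0 < y" by (rule set_mu_pos[OF jM])
      then show "y = max (y - 0) 0" by simp
    qed
  qed simp_all
  also have "\<dots> = 1" using cl_mu_grid[OF j, of 0] hC0[OF j] by simp
  finally show ?thesis .
qed

end

primrec chain :: "(nat \<Rightarrow> real \<Rightarrow> real pmf) \<Rightarrow> nat \<Rightarrow> (nat \<Rightarrow> real) pmf" where
  "chain kk 0 = return_pmf (\<lambda>_. 1)"
| "chain kk (Suc k) = bind_pmf (chain kk k) (\<lambda>w. map_pmf (\<lambda>y. w(Suc k := y)) (kk k (w k)))"

definition tr :: "nat \<Rightarrow> (nat \<Rightarrow> real) \<Rightarrow> nat \<Rightarrow> real" where
  "tr m w = (\<lambda>i. if i \<le> m then w i else 1)"

lemma chain_default: "w \<in> set_pmf (chain kk k) \<Longrightarrow> k < i \<Longrightarrow> w i = 1"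
proof (induction k arbitrary: w)
  case 0 then show ?case by simp
next
  case (Suc k)
  then obtain w' y where "w' \<in> set_pmf (chain kk k)" "w = w'(Suc k := y)" by auto
  then show ?case using Suc by auto
qed

lemma chain_tr: "m \<le> l \<Longrightarrow> map_pmf (tr m) (chain kk l) = chain kk m"
proof (induction l rule: dec_induct)
  case base
  have "map_pmf (tr m) (chain kk m) = map_pmf (\<lambda>w. w) (chain kk m)"
    by (intro map_pmf_cong refl) (auto simp: tr_def fun_eq_iff chain_default)
  then show ?case by simp
next
  case (step l)
  have "map_pmf (tr m) (chain kk (Suc l)) =
        bind_pmf (chain kk l) (\<lambda>w. map_pmf (\<lambda>y. tr m (w(Suc l := y))) (kk l (w l)))"
    by (simp add: map_bind_pmf map_pmf_comp)
  also have "\<dots> = bind_pmf (chain kk l) (\<lambda>w. map_pmf (\<lambda>_. tr m w) (kk l (w l)))"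
    using step.hyps by (intro bind_pmf_cong refl map_pmf_cong) (auto simp: tr_def fun_eq_iff)
  also have "\<dots> = map_pmf (tr m) (chain kk l)"
    by (simp add: map_pmf_const map_pmf_def)
  finally show ?case using step.IH by simp
qed

context setting
begin

definition KP :: "nat \<Rightarrow> (real \<Rightarrow> real pmf) \<Rightarrow> bool" where
  "KP j \<kappa> \<longleftrightarrow> (\<forall>y\<in>set_pmf (mu j). finite (set_pmf (\<kappa> y)) \<and> (\<integral>z. z \<partial>measure_pmf (\<kappa> y)) = y)
      \<and> bind_pmf (mu j) \<kappa> = mu (Suc j)"

definition kern :: "nat \<Rightarrow> real \<Rightarrow> real pmf" where
  "kern j = (if j = 0 then (\<lambda>_. mu 1) else (SOME \<kappa>. KP j \<kappa>))"

lemma KP_ex: "j < M \<Longrightarrow> \<exists>\<kappa>. KP j \<kappa>"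
proof (cases "j = 0")
  case True
  have "KP 0 (\<lambda>_. mu 1)" unfolding KP_def
  proof (intro conjI ballI)
    show "finite (set_pmf (mu 1))" using set_mu[of 1] hM by (meson finite_imageI finite_lessThan finite_subset order_refl)
  next
    fix y assume "y \<in> set_pmf (mu 0)"
    then have "y = 1" by (simp add: mu_def)
    then show "(\<integral>z. z \<partial>measure_pmf (mu 1)) = y" using mean_mu[of 1] hM by simp
  qed (simp add: mu_def bind_return_pmf)
  then show ?thesis using True by blast
next
  case False
  assume jM: "j < M"
  have j: "1 \<le> j" "j \<le> M" "1 \<le> Suc j" "Suc j \<le> M" using False jM by auto
  obtain \<kappa> where k: "\<forall>y\<in>set_pmf (mu j). set_pmf (\<kappa> y) \<subseteq> Ks ` {..N} \<and> (\<integral>z. z \<partial>measure_pmf (\<kappa> y)) = y"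
    and b: "bind_pmf (mu j) \<kappa> = mu (Suc j)"
    using G.strassen[OF set_mu_grid[OF j(3,4)] set_mu_grid[OF j(1,2)]]
      cl_mu_grid[OF j(1,2)] cl_mu_grid[OF j(3,4)] hcal[OF j(1) jM] hC0[OF j(1,2)] hC0[OF j(3,4)]
    by force
  have "KP j \<kappa>" unfolding KP_def
  proof (rule conjI[OF ballI b])
    fix y assume "y \<in> set_pmf (mu j)"
    then show "finite (set_pmf (\<kappa> y)) \<and> (\<integral>z. z \<partial>measure_pmf (\<kappa> y)) = y"
      using k by (meson finite_atMost finite_imageI finite_subset)
  qed
  then show ?thesis by blast
qed

lemma KP_kern: "j < M \<Longrightarrow> KP j (kern j)"
proof (cases "j = 0")
  case True
  assume "j < M"
  then obtain \<kappa> where "KP j \<kappa>" using KP_ex by blast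
  have "KP 0 (\<lambda>_. mu 1)" unfolding KP_def
  proof (intro conjI ballI)
    show "finite (set_pmf (mu 1))" using set_mu[of 1] hM by (meson finite_imageI finite_lessThan finite_subset order_refl)
  next
    fix y assume "y \<in> set_pmf (mu 0)"
    then have "y = 1" by (simp add: mu_def)
    then show "(\<integral>z. z \<partial>measure_pmf (mu 1)) = y" using mean_mu[of 1] hM by simp
  qed (simp add: mu_def bind_return_pmf)
  then show ?thesis using True by (simp add: kern_def)
next
  case False
  assume "j < M"
  then obtain \<kappa> where "KP j \<kappa>" using KP_ex[of j] by blast
  then show ?thesis using False someI[of "KP j" \<kappa>] by (simp add: kern_def)
qed

abbreviation ch :: "nat \<Rightarrow> (nat \<Rightarrow> real) pmf" where "ch \<equiv> chain kern"

lemma marg: "k \<le> M \<Longrightarrow> map_pmf (\<lambda>w. w k) (ch k) = mu k"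
proof (induction k)
  case 0 then show ?case by (simp add: mu_def)
next
  case (Suc k)
  then have kM: "k < M" by simp
  have "map_pmf (\<lambda>w. w (Suc k)) (ch (Suc k)) = bind_pmf (ch k) (\<lambda>w. kern k (w k))"
    by (simp add: map_bind_pmf map_pmf_comp)
  also have "\<dots> = bind_pmf (map_pmf (\<lambda>w. w k) (ch k)) (kern k)" by (simp add: bind_map_pmf)
  also have "\<dots> = mu (Suc k)" using Suc KP_kern[OF kM] by (simp add: KP_def)
  finally show ?case .
qed

lemma set_ch: "k \<le> M \<Longrightarrow> w \<in> set_pmf (ch k) \<Longrightarrow> w k \<in> set_pmf (mu k)"
  using marg[of k] by (metis image_eqI set_map_pmf)

lemma finite_ch: "k \<le> M \<Longrightarrow> finite (set_pmf (ch k))"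
proof (induction k)
  case 0 then show ?case by simp
next
  case (Suc k)
  then have kM: "k < M" by simp
  have "finite (set_pmf (kern k (w k)))" if "w \<in> set_pmf (ch k)" for w
    using KP_kern[OF kM] set_ch[of k w] that kM by (simp add: KP_def)
  then show ?case using Suc by simp
qed

lemma marg_M: "k \<le> M \<Longrightarrow> map_pmf (\<lambda>w. w k) (ch M) = mu k"
proof -
  assume k: "k \<le> M"
  have "map_pmf (\<lambda>w. w k) (ch M) = map_pmf (\<lambda>w. w k) (map_pmf (tr k) (ch M))"
    by (simp add: map_pmf_comp tr_def)
  also have "\<dots> = mu k" using chain_tr[OF k] marg[OF k] by simp
  finally show ?thesis .
qed

lemma set_chM: "k \<le> M \<Longrightarrow> w \<in> set_pmf (ch M) \<Longrightarrow> w k \<in> set_pmf (mu k)"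
  using marg_M[of k] by (metis image_eqI set_map_pmf)

lemma chain_mart:
  fixes G :: "(nat \<Rightarrow> real) \<Rightarrow> real"
  assumes mk: "m \<le> k" "k < M"
    and dep: "\<And>w w'. (\<forall>i\<le>m. w i = w' i) \<Longrightarrow> G w = G w'"
  shows "(\<integral>w. G w * (w (Suc k) - w k) \<partial>measure_pmf (ch M)) = 0"
proof -
  let ?f = "\<lambda>w. G w * (w (Suc k) - w k)"
  have ftr: "?f (tr (Suc k) w) = ?f w" for w
    using mk dep[of "tr (Suc k) w" w] by (simp add: tr_def)
  have "(\<integral>w. ?f w \<partial>measure_pmf (ch M)) = (\<integral>w. ?f (tr (Suc k) w) \<partial>measure_pmf (ch M))"
    by (simp add: ftr)
  also have "\<dots> = (\<integral>w. ?f w \<partial>measure_pmf (map_pmf (tr (Suc k)) (ch M)))" by simp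
  also have "\<dots> = (\<integral>w. ?f w \<partial>measure_pmf (ch (Suc k)))" using chain_tr[of "Suc k" M] mk by simp
  also have "\<dots> = (\<integral>w. (\<integral>w'. ?f w' \<partial>measure_pmf (map_pmf (\<lambda>y. w(Suc k := y)) (kern k (w k)))) \<partial>measure_pmf (ch k))"
    unfolding chain.simps
  proof (rule integral_bind_pmf_fin)
    show "finite (set_pmf (ch k))" using mk by (intro finite_ch) simp
    fix w assume "w \<in> set_pmf (ch k)"
    then have "finite (set_pmf (kern k (w k)))"
      using KP_kern[OF mk(2)] set_ch[of k w] mk by (simp add: KP_def)
    then show "finite (set_pmf (map_pmf (\<lambda>y. w(Suc k := y)) (kern k (w k))))" by simp
  qed
  also have "\<dots> = (\<integral>w. 0 \<partial>measure_pmf (ch k))"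
  proof (intro integral_cong_AE)
    show "AE w in measure_pmf (ch k). (\<integral>w'. ?f w' \<partial>measure_pmf (map_pmf (\<lambda>y. w(Suc k := y)) (kern k (w k)))) = 0"
      unfolding AE_measure_pmf_iff
    proof
      fix w assume w: "w \<in> set_pmf (ch k)"
      have yk: "w k \<in> set_pmf (mu k)" using set_ch[OF _ w] mk by simp
      have fin: "finite (set_pmf (kern k (w k)))" and mean: "(\<integral>z. z \<partial>measure_pmf (kern k (w k))) = w k"
        using KP_kern[OF mk(2)] yk by (auto simp: KP_def)
      have Geq: "G (w(Suc k := y)) = G w" for y using mk by (intro dep) auto
      have "(\<integral>w'. ?f w' \<partial>measure_pmf (map_pmf (\<lambda>y. w(Suc k := y)) (kern k (w k))))
          = (\<integral>y. G w * (y - w k) \<partial>measure_pmf (kern k (w k)))"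
        by (simp add: Geq)
      also have "\<dots> = G w * ((\<integral>y. y \<partial>measure_pmf (kern k (w k))) - w k)"
        using fin by (simp add: integrable_measure_pmf_finite)
      also have "\<dots> = 0" using mean by simp
      finally show "(\<integral>w'. ?f w' \<partial>measure_pmf (map_pmf (\<lambda>y. w(Suc k := y)) (kern k (w k)))) = 0" .
    qed
  qed simp_all
  also have "\<dots> = 0" by simp
  finally show ?thesis .
qed

end

definition MO :: "(real \<Rightarrow> real) measure" where "MO = PiM UNIV (\<lambda>_. borel)"
definition UU :: "real measure" where "UU = restrict_space lborel {0..<1}"

lemma space_MO[simp]: "space MO = UNIV"
  by (simp add: MO_def space_PiM)

lemma space_UU[simp]: "space UU = {0..<1}"
  by (simp add: UU_def space_restrict_space)

lemma prob_UU: "prob_space UU"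
  by (rule prob_spaceI) (simp add: UU_def emeasure_restrict_space)

lemma comp_meas[measurable]: "(\<lambda>w. w r) \<in> borel_measurable MO"
  unfolding MO_def by measurable

lemma meas_MO_I:
  assumes "\<And>r. (\<lambda>x. f x r) \<in> borel_measurable N"
  shows "f \<in> N \<rightarrow>\<^sub>M MO"
  unfolding MO_def by (rule measurable_PiM_single'[of UNIV "\<lambda>r x. f x r", simplified]) (use assms in auto)

lemma fst_UU_meas[measurable]: "(\<lambda>q. fst q) \<in> borel_measurable (UU \<Otimes>\<^sub>M measure_pmf p)"
proof -
  have "fst \<in> (UU \<Otimes>\<^sub>M measure_pmf p) \<rightarrow>\<^sub>M UU" by (rule measurable_fst)
  moreover have "(\<lambda>u. u) \<in> UU \<rightarrow>\<^sub>M borel" unfolding UU_def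
    by (rule measurable_restrict_space1) simp
  ultimately show ?thesis using measurable_comp by (metis comp_id fun.map_ident)
qed

lemma snd_fun_meas[measurable]: "(\<lambda>q. g (snd q)) \<in> borel_measurable (UU \<Otimes>\<^sub>M measure_pmf p)"
proof -
  have "snd \<in> (UU \<Otimes>\<^sub>M measure_pmf p) \<rightarrow>\<^sub>M measure_pmf p" by (rule measurable_snd)
  moreover have "g \<in> borel_measurable (measure_pmf p)" by simp
  ultimately show ?thesis by (rule measurable_compose)
qed

context setting
begin

sublocale TG: grid Ts M by unfold_locales (rule hT)

definition jt :: "real \<Rightarrow> nat" where "jt t = Max {j. j < M \<and> Ts j \<le> t}"
definition nn :: "real \<Rightarrow> real \<Rightarrow> nat" where "nn t u = jt t + (if u < \<alpha> (jt t) t then 1 else 0)"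
definition Zp :: "real \<Rightarrow> (real \<Rightarrow> real) \<Rightarrow> real" where
  "Zp t w = (if w (-1) < \<alpha> (jt t) t then w (real (Suc (jt t))) else w (real (jt t)))"
definition Yp :: "real \<Rightarrow> (real \<Rightarrow> real) \<Rightarrow> (real \<Rightarrow> real)" where
  "Yp s w = (\<lambda>r. if r \<le> real (nn s (w (-1))) then w r else 0)"
definition good :: "(nat \<Rightarrow> real) \<Rightarrow> (nat \<Rightarrow> real)" where
  "good w = (if w \<in> set_pmf (ch M) then w else (SOME w. w \<in> set_pmf (ch M)))"
definition emb :: "real \<times> (nat \<Rightarrow> real) \<Rightarrow> (real \<Rightarrow> real)" where
  "emb q = (\<lambda>r. if r < 0 then fst q else good (snd q) (nat \<lfloor>r\<rfloor>))"
definition QQ :: "(real \<times> (nat \<Rightarrow> real)) measure" where "QQ = UU \<Otimes>\<^sub>M measure_pmf (ch M)"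
definition PP :: "(real \<Rightarrow> real) measure" where "PP = distr QQ MO emb"
definition FF :: "real \<Rightarrow> (real \<Rightarrow> real) measure" where "FF s = vimage_algebra UNIV (Yp s) MO"

lemma emb_meas[measurable]: "emb \<in> QQ \<rightarrow>\<^sub>M MO"
  unfolding QQ_def emb_def by (rule meas_MO_I) measurable

lemma Zp_meas[measurable]: "Zp t \<in> borel_measurable MO"
  unfolding Zp_def by measurable

lemma Yp_meas[measurable]: "Yp s \<in> MO \<rightarrow>\<^sub>M MO"
  unfolding Yp_def nn_def by (rule meas_MO_I) measurable

end

lemma int_UU:
  fixes a c0 c1 :: real
  assumes a: "0 \<le> a" "a \<le> 1"
  shows "(\<integral>u. (if u < a then c1 else c0) \<partial>UU) = a * c1 + (1 - a) * c0"
proof -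
  interpret U: prob_space UU by (rule prob_UU)
  have eq: "(\<lambda>u. if u < a then c1 else c0) = (\<lambda>u. c0 + (c1 - c0) * indicator {..<a} u)"
    by (auto simp: fun_eq_iff indicator_def)
  have "(\<integral>u. (if u < a then c1 else c0) \<partial>UU) = c0 + (c1 - c0) * measure UU ({..<a} \<inter> space UU)"
  proof -
    have i2: "integrable UU (\<lambda>u. (c1 - c0) * indicator {..<a} u)"
    proof (rule U.integrable_const_bound[where B="\<bar>c1 - c0\<bar>"])
      show "AE u in UU. norm ((c1 - c0) * indicator {..<a} u) \<le> \<bar>c1 - c0\<bar>"
        by (intro AE_I2) (auto simp: indicator_def)
      show "(\<lambda>u. (c1 - c0) * indicator {..<a} u) \<in> borel_measurable UU"
        unfolding UU_def by (intro measurable_restrict_space1) measurable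
    qed
    have "(\<integral>u. c0 + (c1 - c0) * indicator {..<a} u \<partial>UU) = (\<integral>u. c0 \<partial>UU) + (\<integral>u. (c1 - c0) * indicator {..<a} u \<partial>UU)"
      using i2 by (intro Bochner_Integration.integral_add) auto
    also have "\<dots> = c0 + (c1 - c0) * measure UU ({..<a} \<inter> space UU)"
      using U.prob_space by simp
    finally show ?thesis unfolding eq .
  qed
  also have "measure UU ({..<a} \<inter> space UU) = a"
  proof -
    have "{..<a} \<inter> space UU = {0..<a}" using a by auto
    moreover have "measure UU {0..<a} = measure lborel {0..<a}"
      unfolding UU_def using a by (intro measure_restrict_space) auto
    ultimately show ?thesis using a by (simp add: measure_def)
  qed
  finally show ?thesis by (simp add: algebra_simps)
qed

context setting
begin

lemma jt_prop:
  assumes t: "0 \<le> t" "t \<le> Ts M"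
  shows "jt t < M" "Ts (jt t) \<le> t" "t \<le> Ts (Suc (jt t))"
proof -
  let ?S = "{j. j < M \<and> Ts j \<le> t}"
  have fin: "finite ?S" by simp
  have "0 \<in> ?S" using hM hT0 t by simp
  then have "jt t \<in> ?S" unfolding jt_def using fin by (intro Max_in) auto
  then show "jt t < M" "Ts (jt t) \<le> t" by auto
  show "t \<le> Ts (Suc (jt t))"
  proof (cases "Suc (jt t) < M")
    case True
    show ?thesis
    proof (rule ccontr)
      assume "\<not> t \<le> Ts (Suc (jt t))"
      then have "Suc (jt t) \<in> ?S" using True by simp
      then have "Suc (jt t) \<le> jt t" unfolding jt_def using fin by (intro Max_ge) auto
      then show False by simp
    qed
  next
    case False
    then have "Suc (jt t) = M" using \<open>jt t < M\<close> by simp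
    then show ?thesis using t by simp
  qed
qed

lemma jt_mono:
  assumes "0 \<le> s" "s \<le> t"
  shows "jt s \<le> jt t"
proof -
  have "0 \<in> {j. j < M \<and> Ts j \<le> s}" using hM hT0 assms by simp
  moreover have "{j. j < M \<and> Ts j \<le> s} \<subseteq> {j. j < M \<and> Ts j \<le> t}" using assms by auto
  ultimately show ?thesis unfolding jt_def by (intro Max_mono) auto
qed

lemma jt0: "jt 0 = 0"
proof -
  have "0 \<le> Ts M" using TG.x_le[of 0 M] hT0 by simp
  then have "jt 0 < M" "Ts (jt 0) \<le> 0" using jt_prop[of 0] hT0 by auto
  then show ?thesis using TG.x_less[of 0 "jt 0"] hT0 by (cases "jt 0 = 0") auto
qed

lemma al_range: "0 \<le> t \<Longrightarrow> t \<le> Ts M \<Longrightarrow> \<alpha> (jt t) t \<in> {0..1}"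
  using h\<alpha>range jt_prop by auto

lemma nn_le: "0 \<le> t \<Longrightarrow> t \<le> Ts M \<Longrightarrow> nn t u \<le> M"
  using jt_prop(1)[of t] by (auto simp: nn_def)

lemma nn_mono:
  assumes "0 \<le> s" "s \<le> t" "t \<le> Ts M"
  shows "nn s u \<le> nn t u"
proof (cases "jt s = jt t")
  case True
  have s: "s \<in> {Ts (jt s)..Ts (Suc (jt s))}" using jt_prop[of s] assms by auto
  have t: "t \<in> {Ts (jt s)..Ts (Suc (jt s))}" using jt_prop[of t] assms True by auto
  have "\<alpha> (jt s) s \<le> \<alpha> (jt s) t"
    using h\<alpha>mono[of "jt s"] jt_prop[of s] assms s t by (auto simp: mono_on_def)
  then show ?thesis using True by (auto simp: nn_def)
next
  case False
  then have "jt s < jt t" using jt_mono[of s t] assms by simp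
  then show ?thesis by (auto simp: nn_def)
qed

lemma good_in: "good w \<in> set_pmf (ch M)"
  unfolding good_def using set_pmf_not_empty[of "ch M"] some_in_eq[of "set_pmf (ch M)"] by auto

lemma good_eq: "w \<in> set_pmf (ch M) \<Longrightarrow> good w = w"
  by (simp add: good_def)

definition B0 :: real where "B0 = max 1 (Ks N)"

lemma ch_bound:
  assumes "w \<in> set_pmf (ch M)"
  shows "0 < w i" "w i \<le> B0"
proof -
  have "0 < w i \<and> w i \<le> B0"
  proof (cases "i \<le> M")
    case True
    then have wi: "w i \<in> set_pmf (mu i)" using set_chM assms by simp
    show ?thesis
    proof (cases "i = 0")
      case True then show ?thesis using wi by (simp add: mu_def B0_def)
    next
      case False
      then have j: "1 \<le> i" "i \<le> M" using \<open>i \<le> M\<close> by auto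
      then obtain l where l: "l < N" "w i = Ks (Suc l)" using set_mu[OF j] wi by auto
      then have "Ks (Suc l) \<le> Ks N" by (intro G.x_le) auto
      then show ?thesis using l set_mu_pos[OF j(2) wi] by (simp add: B0_def)
    qed
  next
    case False
    then show ?thesis using chain_default[OF assms, of i] by (simp add: B0_def)
  qed
  then show "0 < w i" "w i \<le> B0" by auto
qed

lemma space_QQ: "space QQ = {0..<1} \<times> UNIV"
  by (simp add: QQ_def space_pair_measure)

lemma pair_QQ: "pair_prob_space UU (measure_pmf (ch M))"
proof -
  interpret U: prob_space UU by (rule prob_UU)
  show ?thesis
    by (intro pair_prob_space.intro pair_sigma_finite.intro U.prob_space_axioms
        measure_pmf.prob_space_axioms U.sigma_finite_measure_axioms
        measure_pmf.sigma_finite_measure_axioms)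
qed

lemma prob_QQ: "prob_space QQ"
proof -
  interpret pair_prob_space UU "measure_pmf (ch M)" by (rule pair_QQ)
  show ?thesis unfolding QQ_def by (rule P.prob_space_axioms)
qed

lemma prob_PP: "prob_space PP"
  unfolding PP_def by (rule prob_space.prob_space_distr[OF prob_QQ emb_meas])

lemma Zp_emb: "Zp t (emb q) = good (snd q) (nn t (fst q))"
  by (simp add: Zp_def emb_def nn_def del: of_nat_Suc)

end

context setting
begin

lemma QQ_fubini:
  fixes h :: "real \<times> (nat \<Rightarrow> real) \<Rightarrow> real"
  assumes hm: "h \<in> borel_measurable QQ" and hb: "\<And>q. q \<in> space QQ \<Longrightarrow> \<bar>h q\<bar> \<le> B"
  shows "integral\<^sup>L QQ h = (\<integral>u. (\<integral>w. h (u, w) \<partial>measure_pmf (ch M)) \<partial>UU)"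
proof -
  interpret pair_prob_space UU "measure_pmf (ch M)" by (rule pair_QQ)
  have "integrable (UU \<Otimes>\<^sub>M measure_pmf (ch M)) h"
    using hm hb unfolding QQ_def by (intro P.integrable_const_bound[where B=B] AE_I2) auto
  then show ?thesis unfolding QQ_def by (rule integral_fst'[symmetric])
qed

lemma inner_good: "(\<integral>w. f (good w) \<partial>measure_pmf (ch M)) = (\<integral>w. f w \<partial>measure_pmf (ch M))"
  for f :: "(nat \<Rightarrow> real) \<Rightarrow> real"
  by (intro integral_cong_AE) (auto simp: AE_measure_pmf_iff good_eq)

lemma inner_call:
  assumes m: "m \<le> M"
  shows "(\<integral>w. max (good w m - k) 0 \<partial>measure_pmf (ch M)) = cl (mu m) k"
proof -
  have "(\<integral>w. max (good w m - k) 0 \<partial>measure_pmf (ch M)) = (\<integral>w. max (w m - k) 0 \<partial>measure_pmf (ch M))"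
    by (rule inner_good[where f="\<lambda>w. max (w m - k) 0"])
  also have "\<dots> = (\<integral>y. max (y - k) 0 \<partial>measure_pmf (map_pmf (\<lambda>w. w m) (ch M)))" by simp
  also have "\<dots> = cl (mu m) k" using marg_M[OF m] by (simp add: cl_def)
  finally show ?thesis .
qed

lemma nn_cases: "nn t u = (if u < \<alpha> (jt t) t then Suc (jt t) else jt t)"
  by (simp add: nn_def)

lemma call_PP:
  assumes t: "0 \<le> t" "t \<le> Ts M" and k: "0 \<le> k"
  shows "(\<integral>w. max (Zp t w - k) 0 \<partial>PP) = Cs t k"
proof -
  let ?j = "jt t" and ?a = "\<alpha> (jt t) t"
  have j: "?j < M" "Ts ?j \<le> t" "t \<le> Ts (Suc ?j)" using jt_prop[OF t] by auto
  have a: "0 \<le> ?a" "?a \<le> 1" using al_range[OF t] by auto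
  have "(\<integral>w. max (Zp t w - k) 0 \<partial>PP) = (\<integral>q. max (Zp t (emb q) - k) 0 \<partial>QQ)"
    unfolding PP_def by (rule integral_distr) measurable
  also have "\<dots> = (\<integral>u. (\<integral>w. max (Zp t (emb (u, w)) - k) 0 \<partial>measure_pmf (ch M)) \<partial>UU)"
  proof (rule QQ_fubini[where B=B0])
    show "(\<lambda>q. max (Zp t (emb q) - k) 0) \<in> borel_measurable QQ" by measurable
    fix q assume "q \<in> space QQ"
    have "0 < good (snd q) (nn t (fst q))" "good (snd q) (nn t (fst q)) \<le> B0"
      using ch_bound[OF good_in] by auto
    then show "\<bar>max (Zp t (emb q) - k) 0\<bar> \<le> B0" using k by (simp add: Zp_emb)
  qed
  also have "\<dots> = (\<integral>u. (if u < ?a then cl (mu (Suc ?j)) k else cl (mu ?j) k) \<partial>UU)"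
  proof (intro Bochner_Integration.integral_cong refl)
    fix u
    have "(\<integral>w. max (Zp t (emb (u, w)) - k) 0 \<partial>measure_pmf (ch M)) = (\<integral>w. max (good w (nn t u) - k) 0 \<partial>measure_pmf (ch M))"
      by (simp add: Zp_emb)
    also have "\<dots> = cl (mu (nn t u)) k" by (rule inner_call[OF nn_le[OF t]])
    finally show "(\<integral>w. max (Zp t (emb (u, w)) - k) 0 \<partial>measure_pmf (ch M)) = (if u < ?a then cl (mu (Suc ?j)) k else cl (mu ?j) k)"
      by (simp add: nn_cases)
  qed
  also have "\<dots> = ?a * cl (mu (Suc ?j)) k + (1 - ?a) * cl (mu ?j) k" using a by (rule int_UU)
  also have "\<dots> = ?a * Cbar N Ks C (Suc ?j) k + (1 - ?a) * Cbar N Ks C ?j k"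
  proof -
    have "cl (mu (Suc ?j)) k = Cbar N Ks C (Suc ?j) k" using j k by (intro cl_mu) auto
    moreover have "cl (mu ?j) k = Cbar N Ks C ?j k"
      using j k cl_mu[of ?j k] cl_mu0[of k] by (cases "?j = 0") auto
    ultimately show ?thesis by simp
  qed
  also have "\<dots> = Cs t k" using hCs[of ?j t k] j k by simp
  finally show ?thesis .
qed

lemma Zp_bound_QQ: "q \<in> space QQ \<Longrightarrow> \<bar>Zp t (emb q)\<bar> \<le> B0"
  using ch_bound[OF good_in, of "snd q" "nn t (fst q)"] by (simp add: Zp_emb)

lemma integrable_Zp: "integrable PP (Zp t)"
proof -
  interpret Q: prob_space QQ by (rule prob_QQ)
  have "integrable QQ (\<lambda>q. Zp t (emb q))"
    by (intro Q.integrable_const_bound[where B=B0] AE_I2) (auto simp: Zp_bound_QQ)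
  then show ?thesis unfolding PP_def by (subst integrable_distr_eq) auto
qed

lemma Zp_pos: "AE w in PP. 0 < Zp t w"
  unfolding PP_def
proof (subst AE_distr_iff)
  show "AE q in QQ. 0 < Zp t (emb q)"
    using ch_bound[OF good_in] by (intro AE_I2) (simp add: Zp_emb)
qed measurable

lemma Zp_0: "AE w in PP. Zp 0 w = 1"
  unfolding PP_def
proof (subst AE_distr_iff)
  have a0: "\<alpha> 0 0 = 0" using h\<alpha>0[of 0] hM hT0 by simp
  show "AE q in QQ. Zp 0 (emb q) = 1"
  proof (intro AE_I2)
    fix q assume q: "q \<in> space QQ"
    then have "0 \<le> fst q" by (auto simp: space_QQ)
    then have "nn 0 (fst q) = 0" using a0 by (simp add: nn_def jt0)
    moreover have "good (snd q) 0 \<in> set_pmf (mu 0)" using set_chM[OF _ good_in] by simp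
    ultimately show "Zp 0 (emb q) = 1" by (simp add: Zp_emb mu_def)
  qed
qed measurable

end

context setting
begin

lemma space_PP[simp]: "space PP = UNIV" by (simp add: PP_def)
lemma sets_PP[simp]: "sets PP = sets MO" by (simp add: PP_def)

lemma sets_FF: "sets (FF s) = {Yp s -` A | A. A \<in> sets MO}"
  unfolding FF_def by (subst sets_vimage_algebra2) auto

lemma subalg_FF: "subalgebra PP (FF s)"
proof -
  have "sets (FF s) \<subseteq> sets PP"
  proof
    fix A assume "A \<in> sets (FF s)"
    then obtain B where B: "B \<in> sets MO" "A = Yp s -` B" by (auto simp: sets_FF)
    have "Yp s -` B \<inter> space MO \<in> sets MO" using Yp_meas B(1) by (rule measurable_sets)
    then show "A \<in> sets PP" using B by simp
  qed
  then show ?thesis by (simp add: subalgebra_def FF_def)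
qed

lemma Yp_Yp:
  assumes "0 \<le> s" "s \<le> t" "t \<le> Ts M"
  shows "Yp s (Yp t w) = Yp s w"
proof -
  have "Yp t w (-1) = w (-1)" by (simp add: Yp_def)
  moreover have "real (nn s (w (-1))) \<le> real (nn t (w (-1)))" using nn_mono[OF assms] by simp
  ultimately show ?thesis by (auto simp: Yp_def fun_eq_iff)
qed

lemma FF_mono:
  assumes "0 \<le> s" "s \<le> t" "t \<le> Ts M"
  shows "sets (FF s) \<subseteq> sets (FF t)"
proof
  fix A assume "A \<in> sets (FF s)"
  then obtain B where B: "B \<in> sets MO" "A = Yp s -` B" by (auto simp: sets_FF)
  have "Yp s -` B \<inter> space MO \<in> sets MO" using Yp_meas B(1) by (rule measurable_sets)
  moreover have "A = Yp t -` (Yp s -` B)" using B Yp_Yp[OF assms] by auto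
  ultimately show "A \<in> sets (FF t)" by (auto simp: sets_FF)
qed

lemma Zp_Yp: "Zp s (Yp s w) = Zp s w"
  by (simp add: Zp_def Yp_def nn_def del: of_nat_Suc)

lemma Zp_meas_FF: "Zp s \<in> borel_measurable (FF s)"
proof -
  have "Yp s \<in> FF s \<rightarrow>\<^sub>M MO" unfolding FF_def by (rule measurable_vimage_algebra1) simp
  then have "(\<lambda>w. Zp s (Yp s w)) \<in> borel_measurable (FF s)" by measurable
  then show ?thesis by (simp add: Zp_Yp)
qed

definition emb' :: "real \<Rightarrow> (nat \<Rightarrow> real) \<Rightarrow> (real \<Rightarrow> real)" where
  "emb' u w = (\<lambda>r. if r < 0 then u else w (nat \<lfloor>r\<rfloor>))"

lemma emb_emb': "emb (u, w) = emb' u (good w)"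
  unfolding emb_def emb'_def by (simp add: fun_eq_iff)

lemma inner_mart:
  assumes st: "0 \<le> s" "s \<le> t" "t \<le> Ts M"
  shows "(\<integral>w. indicator B (Yp s (emb (u, w))) * Zp t (emb (u, w)) \<partial>measure_pmf (ch M))
       = (\<integral>w. indicator B (Yp s (emb (u, w))) * Zp s (emb (u, w)) \<partial>measure_pmf (ch M))"
proof -
  define m where "m = nn s u"
  define n' where "n' = nn t u"
  have mn: "m \<le> n'" "n' \<le> M" unfolding m_def n'_def using nn_mono[OF st] nn_le[of t u] st by auto
  define G where "G w = (indicator B (Yp s (emb' u w)) :: real)" for w
  have Gdep: "G w = G w'" if "\<forall>i\<le>m. w i = w' i" for w w'
  proof -
    have "Yp s (emb' u w) = Yp s (emb' u w')"
    proof
      fix r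
      show "Yp s (emb' u w) r = Yp s (emb' u w') r"
      proof (cases "r \<le> real m \<and> 0 \<le> r")
        case True
        then have "nat \<lfloor>r\<rfloor> \<le> m" by (simp add: nat_le_iff floor_le_iff)
        then show ?thesis using that True by (simp add: Yp_def emb'_def m_def)
      next
        case False
        then show ?thesis by (auto simp: Yp_def emb'_def m_def)
      qed
    qed
    then show ?thesis by (simp add: G_def)
  qed
  have fin: "finite (set_pmf (ch M))" by (rule finite_ch) simp
  have L: "(\<integral>w. indicator B (Yp s (emb (u, w))) * Zp t (emb (u, w)) \<partial>measure_pmf (ch M))
      = (\<integral>w. G w * w n' \<partial>measure_pmf (ch M))"
  proof -
    have "indicator B (Yp s (emb (u, w))) * Zp t (emb (u, w)) = (\<lambda>w. G w * w n') (good w)" for w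
      by (simp only: Zp_emb fst_conv snd_conv) (simp add: emb_emb' G_def n'_def)
    then show ?thesis using inner_good[where f="\<lambda>w. G w * w n'"] by simp
  qed
  have R: "(\<integral>w. indicator B (Yp s (emb (u, w))) * Zp s (emb (u, w)) \<partial>measure_pmf (ch M))
      = (\<integral>w. G w * w m \<partial>measure_pmf (ch M))"
  proof -
    have "indicator B (Yp s (emb (u, w))) * Zp s (emb (u, w)) = (\<lambda>w. G w * w m) (good w)" for w
      by (simp only: Zp_emb fst_conv snd_conv) (simp add: emb_emb' G_def m_def)
    then show ?thesis using inner_good[where f="\<lambda>w. G w * w m"] by simp
  qed
  have "(\<integral>w. G w * w n' \<partial>measure_pmf (ch M)) - (\<integral>w. G w * w m \<partial>measure_pmf (ch M))
      = (\<integral>w. G w * (w n' - w m) \<partial>measure_pmf (ch M))"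
    using fin by (simp add: integrable_measure_pmf_finite right_diff_distrib)
  also have "\<dots> = (\<integral>w. (\<Sum>k\<in>{m..<n'}. G w * (w (Suc k) - w k)) \<partial>measure_pmf (ch M))"
    using mn by (simp add: sum_distrib_left[symmetric] sum_Suc_diff')
  also have "\<dots> = (\<Sum>k\<in>{m..<n'}. (\<integral>w. G w * (w (Suc k) - w k) \<partial>measure_pmf (ch M)))"
    by (rule Bochner_Integration.integral_sum) (simp add: integrable_measure_pmf_finite[OF fin])
  also have "\<dots> = 0"
  proof (intro sum.neutral ballI)
    fix k assume "k \<in> {m..<n'}"
    then have "m \<le> k" "k < M" using mn by auto
    then show "(\<integral>w. G w * (w (Suc k) - w k) \<partial>measure_pmf (ch M)) = 0"
      by (intro chain_mart) (auto intro: Gdep)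
  qed
  finally show ?thesis unfolding L R by simp
qed

lemma mart:
  assumes st: "0 \<le> s" "s \<le> t" "t \<le> Ts M"
  shows "AE w in PP. real_cond_exp PP (FF s) (Zp t) w = Zp s w"
proof -
  interpret P: prob_space PP by (rule prob_PP)
  interpret finite_measure_subalgebra PP "FF s"
    by (intro finite_measure_subalgebra.intro P.finite_measure_axioms finite_measure_subalgebra_axioms.intro subalg_FF)
  show ?thesis
  proof (rule real_cond_exp_charact)
    fix A assume "A \<in> sets (FF s)"
    then obtain B where B: "B \<in> sets MO" "A = Yp s -` B" by (auto simp: sets_FF)
    have indA: "indicator A w = (indicator B (Yp s w) :: real)" for w using B by (simp add: indicator_def)
    have "(\<integral>w\<in>A. Zp t w \<partial>PP) = (\<integral>w. indicator B (Yp s w) * Zp t w \<partial>PP)"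
      by (simp add: set_lebesgue_integral_def indA)
    also have "\<dots> = (\<integral>q. indicator B (Yp s (emb q)) * Zp t (emb q) \<partial>QQ)"
      unfolding PP_def using B by (intro integral_distr) auto
    also have "\<dots> = (\<integral>u. (\<integral>w. indicator B (Yp s (emb (u, w))) * Zp t (emb (u, w)) \<partial>measure_pmf (ch M)) \<partial>UU)"
    proof (rule QQ_fubini[where B=B0])
      show "(\<lambda>q. indicator B (Yp s (emb q)) * Zp t (emb q)) \<in> borel_measurable QQ" using B by measurable
      fix q assume "q \<in> space QQ"
      then show "\<bar>indicator B (Yp s (emb q)) * Zp t (emb q)\<bar> \<le> B0"
        using Zp_bound_QQ[of q t] by (auto simp: indicator_def B0_def)
    qed
    also have "\<dots> = (\<integral>u. (\<integral>w. indicator B (Yp s (emb (u, w))) * Zp s (emb (u, w)) \<partial>measure_pmf (ch M)) \<partial>UU)"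
      by (intro Bochner_Integration.integral_cong refl inner_mart[OF st])
    also have "\<dots> = (\<integral>q. indicator B (Yp s (emb q)) * Zp s (emb q) \<partial>QQ)"
    proof (rule QQ_fubini[where B=B0, symmetric])
      show "(\<lambda>q. indicator B (Yp s (emb q)) * Zp s (emb q)) \<in> borel_measurable QQ" using B by measurable
      fix q assume "q \<in> space QQ"
      then show "\<bar>indicator B (Yp s (emb q)) * Zp s (emb q)\<bar> \<le> B0"
        using Zp_bound_QQ[of q s] by (auto simp: indicator_def B0_def)
    qed
    also have "\<dots> = (\<integral>w. indicator B (Yp s w) * Zp s w \<partial>PP)"
      unfolding PP_def using B by (intro integral_distr[symmetric]) auto
    also have "\<dots> = (\<integral>w\<in>A. Zp s w \<partial>PP)"
      by (simp add: set_lebesgue_integral_def indA)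
    finally show "(\<integral>w\<in>A. Zp t w \<partial>PP) = (\<integral>w\<in>A. Zp s w \<partial>PP)" .
  qed (auto simp: integrable_Zp Zp_meas_FF)
qed

theorem main: "arbitrage_free_call_surface {0..Ts M} Cs"
  unfolding arbitrage_free_call_surface_def
proof (intro exI conjI)
  show "prob_space PP" by (rule prob_PP)
  show "is_martingale PP {0..Ts M} FF Zp"
    unfolding is_martingale_def is_filtration_def
    using subalg_FF FF_mono integrable_Zp Zp_meas_FF mart by auto
  show "AE w in PP. Zp 0 w = 1" by (rule Zp_0)
  show "\<forall>t\<in>{0..Ts M}. AE w in PP. Zp t w > 0" using Zp_pos by auto
  show "\<forall>t\<in>{0..Ts M}. \<forall>k\<ge>0. Cs t k = (\<integral>w. max (Zp t w - k) 0 \<partial>PP)"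
    using call_PP by auto
qed

end

theorem proposition2p5:
  fixes N M :: nat
    and Ks :: "nat \<Rightarrow> real" and Ts :: "nat \<Rightarrow> real"
    and C :: "nat \<Rightarrow> nat \<Rightarrow> real"
    and \<alpha> :: "nat \<Rightarrow> real \<Rightarrow> real"
    and Cs :: "real \<Rightarrow> real \<Rightarrow> real"
  assumes hM: "1 \<le> M"
    and hK0: "Ks 0 = 0" and hK: "\<And>i. i < N \<Longrightarrow> Ks i < Ks (Suc i)"
    and hT0: "Ts 0 = 0" and hT: "\<And>j. j < M \<Longrightarrow> Ts j < Ts (Suc j)"
    and hC0: "\<And>j. 1 \<le> j \<Longrightarrow> j \<le> M \<Longrightarrow> C j 0 = 1"
    and hdC0: "\<And>j. 1 \<le> j \<Longrightarrow> j \<le> M \<Longrightarrow> dC N Ks C j 0 = -1"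
    and hCN: "\<And>j. 1 \<le> j \<Longrightarrow> j \<le> M \<Longrightarrow> C j N = 0"
    and hconv: "\<And>j i. 1 \<le> j \<Longrightarrow> j \<le> M \<Longrightarrow> 1 \<le> i \<Longrightarrow> i \<le> N \<Longrightarrow>
                  dC N Ks C j (i - 1) \<le> dC N Ks C j i"
    and hcal: "\<And>j i. 1 \<le> j \<Longrightarrow> j < M \<Longrightarrow> i \<le> N \<Longrightarrow> C j i \<le> C (Suc j) i"
    and h\<alpha>mono: "\<And>j. j < M \<Longrightarrow> mono_on {Ts j..Ts (Suc j)} (\<alpha> j)"
    and h\<alpha>range: "\<And>j t. j < M \<Longrightarrow> t \<in> {Ts j..Ts (Suc j)} \<Longrightarrow> \<alpha> j t \<in> {0..1}"
    and h\<alpha>0: "\<And>j. j < M \<Longrightarrow> \<alpha> j (Ts j) = 0"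
    and h\<alpha>1: "\<And>j. j < M \<Longrightarrow> \<alpha> j (Ts (Suc j)) = 1"
    and hCs: "\<And>j t k. j < M \<Longrightarrow> t \<in> {Ts j..Ts (Suc j)} \<Longrightarrow> 0 \<le> k \<Longrightarrow>
               Cs t k = \<alpha> j t * Cbar N Ks C (Suc j) k + (1 - \<alpha> j t) * Cbar N Ks C j k"
  shows "arbitrage_free_call_surface {0..Ts M} Cs"
  proof -
  have "setting N M Ks Ts C \<alpha> Cs" by (rule setting.intro; fact)
  then show ?thesis by (rule setting.main)
qed

end
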